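(* Let $\{f_\theta:\theta\in\Theta\}$ be a parametric family of densities on a space $\mathcal{X}$, each with respect to a common base measure $\nu_{\mathcal{X}}$, and let $\pi$ be a positive prior density on $\Theta$ with respect to a base measure $\nu_\Theta$. Suppose that for every $\theta\in\Theta$ the support of $f_\theta$ is contained in the support of $\bar f_\pi$. Fix integers $B\ge1$, $M\ge1$, and let $\widetilde Q^M_\pi(\cdot\mid x,\theta_{1:B})$ be a conditional distribution on $\mathcal X^M$ satisfying: for any $\theta_1,\dots,\theta_B\in\Theta$, if $X\sim g_\pi(\cdot\mid\theta_{1:B})$ and $(\widetilde X^{(1)},\dots,\widetilde X^{(M)})\mid X\sim\widetilde Q^M_\pi(\cdot\mid X,\theta_{1:B})$, then $(X,\widetilde X^{(1)},\dots,\widetilde X^{(M)})$ is exchangeable. Suppose $X\sim f_{\theta_0}$ for some $\theta_0\in\Theta$; given $X$, draw $\widehat\theta_1,\dots,\widehat\theta_B$ i.i.d. from the posterior $\pi(\cdot\mid X)$; given $(X,\widehat\theta_{1:B})$, draw $(\widetilde X^{(1)},\dots,\widetilde X^{(M)})\sim\widetilde Q^M_\pi(\cdot\mid X,\widehat\theta_{1:B})$. Then $$\mathrm{d}_{\mathrm{exch}}\big(X,\widetilde X^{(1)},\dots,\widetilde X^{(M)}\big)\le \inf_{\pi_0}\Big\{\epsilon(\pi_0)+\frac{\Delta(\pi_0)}{2\sqrt B}\Big\},$$ where the infimum is over all densities $\pi_0$ on $\Theta$ with respect to $\nu_\Theta$ such that the support of $\bar f_{\pi_0}$ contains the support of $f_\theta$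 for every $\theta\in\Theta$.
   Context: For a prior density $\rho$ on $\Theta$ (w.r.t. $\nu_\Theta$), the marginal likelihood is $\bar f_\rho(x)=\int_\Theta \rho(\theta)f_\theta(x)\,d\nu_\Theta(\theta)$ and the posterior density (w.r.t. $\nu_\Theta$) is $\rho(\theta\mid x)=\rho(\theta)f_\theta(x)/\bar f_\rho(x)$. For $\theta_1,\dots,\theta_B\in\Theta$, $g_\pi(\cdot\mid\theta_{1:B})$ is the probability density on $\mathcal{X}$ (w.r.t. $\nu_{\mathcal X}$) proportional to $x\mapsto \prod_{b=1}^B f_{\theta_b}(x)/\bar f_\pi(x)^{B-1}$. For a prior density $\pi_0$: $\epsilon(\pi_0)=\mathrm{d}_{\mathrm{TV}}(f_{\theta_0},\bar f_{\pi_0})$, and $\Delta(\pi_0)=\mathbb{E}_{X\sim f_{\theta_0}}\big[\mathrm{d}_{\chi^2}(\pi_0(\cdot\mid X)\,\|\,\pi(\cdot\mid X))^{1/2}\big]$, where $\mathrm{d}_{\chi^2}(Q\|P)=\int (dQ/dP-1)^2\,dP$. For a random vector $(Z_0,\dots,Z_M)$, $\mathrm{d}_{\mathrm{exch}}(Z_0,\dots,Z_M)$ is the infimum of the total variation distance between its law and the law of any exchangeable random vector $(Z_0',\dots,Z_M')$. *)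

theory Defs
  imports "HOL-Probability.Probability"
begin

definition fbar :: "'t measure \<Rightarrow> ('t \<Rightarrow> 'x \<Rightarrow> real) \<Rightarrow> ('t \<Rightarrow> real) \<Rightarrow> 'x \<Rightarrow> real" where
  "fbar MT f rho x = enn2real (\<integral>\<^sup>+ \<theta>. ennreal (rho \<theta> * f \<theta> x) \<partial>MT)"

definition post_dens :: "'t measure \<Rightarrow> ('t \<Rightarrow> 'x \<Rightarrow> real) \<Rightarrow> ('t \<Rightarrow> real) \<Rightarrow> 'x \<Rightarrow> 't \<Rightarrow> real" where
  "post_dens MT f rho x \<theta> = rho \<theta> * f \<theta> x / fbar MT f rho x"

text \<open>Unnormalised density of g_pi(. | theta_{1:B}), theta indexed by {1..B}.\<close>
definition g_unnorm :: "'t measure \<Rightarrow> ('t \<Rightarrow> 'x \<Rightarrow> real) \<Rightarrow> ('t \<Rightarrow> real) \<Rightarrow> nat \<Rightarrow> (nat \<Rightarrow> 't) \<Rightarrow> 'x \<Rightarrow> real" where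
  "g_unnorm MT f pr B ts x = (\<Prod>b\<in>{1..B}. f (ts b) x) / fbar MT f pr x ^ (B - 1)"

definition g_const :: "'x measure \<Rightarrow> 't measure \<Rightarrow> ('t \<Rightarrow> 'x \<Rightarrow> real) \<Rightarrow> ('t \<Rightarrow> real) \<Rightarrow> nat \<Rightarrow> (nat \<Rightarrow> 't) \<Rightarrow> ennreal" where
  "g_const MX MT f pr B ts = (\<integral>\<^sup>+ x. ennreal (g_unnorm MT f pr B ts x) \<partial>MX)"

text \<open>The probability density g_pi(. | theta_{1:B}) (meaningful when 0 < g_const < infinity).\<close>
definition g_dens :: "'x measure \<Rightarrow> 't measure \<Rightarrow> ('t \<Rightarrow> 'x \<Rightarrow> real) \<Rightarrow> ('t \<Rightarrow> real) \<Rightarrow> nat \<Rightarrow> (nat \<Rightarrow> 't) \<Rightarrow> 'x \<Rightarrow> real" where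
  "g_dens MX MT f pr B ts x = g_unnorm MT f pr B ts x / enn2real (g_const MX MT f pr B ts)"

text \<open>Joint law of (X, Xtilde^(1..M)) indexed by {0..M} (index 0 is X),
  where X ~ P and Xtilde | X ~ K X.\<close>
definition joint_law :: "'x measure \<Rightarrow> nat \<Rightarrow> 'x measure \<Rightarrow> ('x \<Rightarrow> (nat \<Rightarrow> 'x) measure) \<Rightarrow> (nat \<Rightarrow> 'x) measure" where
  "joint_law MX M P K = P \<bind> (\<lambda>x. K x \<bind> (\<lambda>y. return (PiM {0..M} (\<lambda>_. MX)) (y(0 := x))))"

definition exchangeable :: "nat set \<Rightarrow> (nat \<Rightarrow> 'x) measure \<Rightarrow> bool" where
  "exchangeable I E \<longleftrightarrow> (\<forall>p. p permutes I \<longrightarrow> distr E E (\<lambda>z. z \<circ> p) = E)"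

definition dTV :: "'a measure \<Rightarrow> 'a measure \<Rightarrow> real" where
  "dTV P Q = (SUP A\<in>sets P. \<bar>measure P A - measure Q A\<bar>)"

definition d_exch :: "'x measure \<Rightarrow> nat \<Rightarrow> (nat \<Rightarrow> 'x) measure \<Rightarrow> real" where
  "d_exch MX M L = (INF E\<in>{E. prob_space E \<and> sets E = sets (PiM {0..M} (\<lambda>_. MX))
                               \<and> exchangeable {0..M} E}. dTV L E)"

definition dchi2 :: "'t measure \<Rightarrow> ('t \<Rightarrow> real) \<Rightarrow> ('t \<Rightarrow> real) \<Rightarrow> ennreal" where
  "dchi2 MT q p = (if AE \<theta> in MT. p \<theta> = 0 \<longrightarrow> q \<theta> = 0
                   then \<integral>\<^sup>+ \<theta>. ennreal ((q \<theta> / p \<theta> - 1)\<^sup>2 * p \<theta>) \<partial>MT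
                   else \<infinity>)"

definition esqrt :: "ennreal \<Rightarrow> ennreal" where
  "esqrt e = (if e = \<infinity> then \<infinity> else ennreal (sqrt (enn2real e)))"

definition eps_err :: "'x measure \<Rightarrow> 't measure \<Rightarrow> ('t \<Rightarrow> 'x \<Rightarrow> real) \<Rightarrow> 't \<Rightarrow> ('t \<Rightarrow> real) \<Rightarrow> real" where
  "eps_err MX MT f \<theta>0 pi0 = dTV (density MX (f \<theta>0)) (density MX (fbar MT f pi0))"

definition Delta_err :: "'x measure \<Rightarrow> 't measure \<Rightarrow> ('t \<Rightarrow> 'x \<Rightarrow> real) \<Rightarrow> ('t \<Rightarrow> real) \<Rightarrow> 't \<Rightarrow> ('t \<Rightarrow> real) \<Rightarrow> ennreal" where
  "Delta_err MX MT f pr \<theta>0 pi0 =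
     (\<integral>\<^sup>+ x. esqrt (dchi2 MT (post_dens MT f pi0 x) (post_dens MT f pr x)) \<partial>density MX (f \<theta>0))"

definition is_density :: "'t measure \<Rightarrow> ('t \<Rightarrow> real) \<Rightarrow> bool" where
  "is_density MT rho \<longleftrightarrow> rho \<in> borel_measurable MT \<and> (\<forall>\<theta>\<in>space MT. 0 \<le> rho \<theta>)
      \<and> (\<integral>\<^sup>+ \<theta>. ennreal (rho \<theta>) \<partial>MT) = 1"

definition supp_cover :: "'x measure \<Rightarrow> 't measure \<Rightarrow> ('t \<Rightarrow> 'x \<Rightarrow> real) \<Rightarrow> ('t \<Rightarrow> real) \<Rightarrow> bool" where
  "supp_cover MX MT f rho \<longleftrightarrow>
     (\<forall>\<theta>\<in>space MT. AE x in MX. f \<theta> x > 0 \<longrightarrow> fbar MT f rho x > 0)"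

end

theory Submission
  imports Defs
begin


lemma PiM_density:
  fixes N :: "'a measure" and g :: "'a \<Rightarrow> ennreal" and I :: "'i set"
  assumes sf: "sigma_finite_measure N" and I: "finite I"
    and g[measurable]: "g \<in> borel_measurable N" and fin: "(\<integral>\<^sup>+x. g x \<partial>N) < \<infinity>"
  shows "PiM I (\<lambda>_. density N g) = density (PiM I (\<lambda>_. N)) (\<lambda>x. \<Prod>i\<in>I. g (x i))"
proof -
  interpret D: finite_measure "density N g"
    using fin by (intro finite_measureI) (auto simp: emeasure_density cong: nn_integral_cong_simp split: split_indicator)
  interpret PD: product_sigma_finite "\<lambda>_. density N g"
    unfolding product_sigma_finite_def using D.sigma_finite_measure_axioms by simp
  interpret PN: product_sigma_finite "\<lambda>_. N"
    unfolding product_sigma_finite_def using sf by simp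
  show ?thesis
  proof (rule PD.PiM_eqI[OF I, symmetric])
    show "sets (density (Pi\<^sub>M I (\<lambda>_. N)) (\<lambda>x. \<Prod>i\<in>I. g (x i))) = sets (Pi\<^sub>M I (\<lambda>_. density N g))"
      by (simp cong: sets_PiM_cong)
    fix A assume A: "\<And>i. i \<in> I \<Longrightarrow> A i \<in> sets (density N g)"
    then have A': "\<And>i. i \<in> I \<Longrightarrow> A i \<in> sets N" by simp
    have "Pi\<^sub>E I A \<in> sets (Pi\<^sub>M I (\<lambda>_. N))"
      using A' I by (intro sets_PiM_I_finite) auto
    then have "emeasure (density (Pi\<^sub>M I (\<lambda>_. N)) (\<lambda>x. \<Prod>i\<in>I. g (x i))) (Pi\<^sub>E I A)
        = (\<integral>\<^sup>+x. (\<Prod>i\<in>I. g (x i)) * indicator (Pi\<^sub>E I A) x \<partial>Pi\<^sub>M I (\<lambda>_. N))"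
      by (subst emeasure_density) auto
    also have "\<dots> = (\<integral>\<^sup>+x. (\<Prod>i\<in>I. g (x i) * indicator (A i) (x i)) \<partial>Pi\<^sub>M I (\<lambda>_. N))"
      by (intro nn_integral_cong) (auto simp: indicator_def prod.distrib space_PiM PiE_iff I)
    also have "\<dots> = (\<Prod>i\<in>I. \<integral>\<^sup>+y. g y * indicator (A i) y \<partial>N)"
      using A' by (intro PN.product_nn_integral_prod I) auto
    also have "\<dots> = (\<Prod>i\<in>I. emeasure (density N g) (A i))"
      using A' by (intro prod.cong refl) (simp add: emeasure_density)
    finally show "emeasure (density (Pi\<^sub>M I (\<lambda>_. N)) (\<lambda>x. \<Prod>i\<in>I. g (x i))) (Pi\<^sub>E I A) = (\<Prod>i\<in>I. emeasure (density N g) (A i))" .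
  qed
qed




lemma prod_if_eq:
  fixes X Y :: "'b::comm_monoid_mult"
  assumes "finite I" "b \<in> I"
  shows "(\<Prod>c\<in>I. if c = b then X else Y) = X * Y ^ (card I - 1)"
proof -
  have "(\<Prod>c\<in>I. if c = b then X else Y) = (if b = b then X else Y) * (\<Prod>c\<in>I - {b}. if c = b then X else Y)"
    by (rule prod.remove[OF assms])
  also have "(\<Prod>c\<in>I - {b}. if c = b then X else Y) = (\<Prod>c\<in>I - {b}. Y)"
    by (intro prod.cong) auto
  also have "\<dots> = Y ^ (card I - 1)"
    using assms by (simp only: prod_constant card_Diff_singleton)
  finally show ?thesis by simp
qed

lemma sep_integral:
  fixes N :: "'a measure" and a w :: "'a \<Rightarrow> ennreal" and I :: "nat set"
  assumes sf: "sigma_finite_measure N" and I: "finite I"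
    and a[measurable]: "a \<in> borel_measurable N" and w[measurable]: "w \<in> borel_measurable N"
  shows "(\<integral>\<^sup>+ts. (\<Prod>c\<in>I. a (ts c)) * (\<Sum>b\<in>I. w (ts b)) \<partial>PiM I (\<lambda>_. N))
       = (\<Sum>b\<in>I. (\<integral>\<^sup>+y. a y * w y \<partial>N) * (\<integral>\<^sup>+y. a y \<partial>N) ^ (card I - 1))"
proof -
  interpret PN: product_sigma_finite "\<lambda>_. N"
    unfolding product_sigma_finite_def using sf by simp
  have eq: "(\<Prod>c\<in>I. a (ts c)) * (\<Sum>b\<in>I. w (ts b)) = (\<Sum>b\<in>I. \<Prod>c\<in>I. (if c = b then (\<lambda>y. a y * w y) else a) (ts c))" for ts
  proof -
    have "(\<Prod>c\<in>I. a (ts c)) * (\<Sum>b\<in>I. w (ts b)) = (\<Sum>b\<in>I. (\<Prod>c\<in>I. a (ts c)) * w (ts b))"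
      by (simp add: sum_distrib_left)
    also have "\<dots> = (\<Sum>b\<in>I. \<Prod>c\<in>I. (if c = b then (\<lambda>y. a y * w y) else a) (ts c))"
    proof (intro sum.cong refl)
      fix b assume b: "b \<in> I"
      have "(\<Prod>c\<in>I. (if c = b then (\<lambda>y. a y * w y) else a) (ts c)) = (\<Prod>c\<in>I. a (ts c) * (if c = b then w (ts c) else 1))"
        by (intro prod.cong) auto
      also have "\<dots> = (\<Prod>c\<in>I. a (ts c)) * w (ts b)"
        using b I by (simp add: prod.distrib prod.delta)
      finally show "(\<Prod>c\<in>I. a (ts c)) * w (ts b) = (\<Prod>c\<in>I. (if c = b then (\<lambda>y. a y * w y) else a) (ts c))" by simp
    qed
    finally show ?thesis .
  qed
  have "(\<integral>\<^sup>+ts. (\<Prod>c\<in>I. a (ts c)) * (\<Sum>b\<in>I. w (ts b)) \<partial>PiM I (\<lambda>_. N))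
      = (\<Sum>b\<in>I. \<integral>\<^sup>+ts. (\<Prod>c\<in>I. (if c = b then (\<lambda>y. a y * w y) else a) (ts c)) \<partial>PiM I (\<lambda>_. N))"
  proof (unfold eq, intro nn_integral_sum borel_measurable_prod_ennreal)
    fix b c assume "c \<in> I"
    show "(\<lambda>x. (if c = b then (\<lambda>y. a y * w y) else a) (x c)) \<in> borel_measurable (PiM I (\<lambda>_. N))"
      using \<open>c \<in> I\<close> by (cases "c = b") auto
  qed
  also have "\<dots> = (\<Sum>b\<in>I. \<Prod>c\<in>I. integral\<^sup>N N (if c = b then (\<lambda>y. a y * w y) else a))"
    by (intro sum.cong refl PN.product_nn_integral_prod I) auto
  also have "\<dots> = (\<Sum>b\<in>I. \<Prod>c\<in>I. if c = b then (\<integral>\<^sup>+y. a y * w y \<partial>N) else (\<integral>\<^sup>+y. a y \<partial>N))"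
    by (intro sum.cong prod.cong refl) auto
  also have "\<dots> = (\<Sum>b\<in>I. (\<integral>\<^sup>+y. a y * w y \<partial>N) * (\<integral>\<^sup>+y. a y \<partial>N) ^ (card I - 1))"
    using I by (intro sum.cong refl prod_if_eq) auto
  finally show ?thesis .
qed




lemma ennreal_sq_le_imp:
  fixes x :: ennreal and c :: real
  assumes "x ^ 2 \<le> ennreal c" "0 \<le> c"
  shows "x \<le> ennreal (sqrt c)"
proof (cases x)
  case (real r)
  then have "ennreal (r ^ 2) \<le> ennreal c" using assms by (simp add: ennreal_power)
  then have "r ^ 2 \<le> c" using assms real by (simp add: ennreal_le_iff)
  then have "r \<le> sqrt c" using real by (simp add: real_le_rsqrt)
  then show ?thesis using real by (simp add: ennreal_leI)
next
  case top
  then show ?thesis using assms by (metis ennreal_neq_top top_unique power_eq_top_ennreal zero_neq_numeral)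
qed

lemma core_var:
  fixes D :: "'a measure" and u :: "'a \<Rightarrow> real" and I :: "nat set"
  assumes D: "prob_space D" and I: "finite I"
    and u[measurable]: "u \<in> borel_measurable D"
    and u2: "integrable D (\<lambda>t. (u t)\<^sup>2)" and u0: "(\<integral>t. u t \<partial>D) = 0"
  shows "(\<integral>\<^sup>+ts. ennreal \<bar>\<Sum>b\<in>I. u (ts b)\<bar> \<partial>PiM I (\<lambda>_. D))
       \<le> ennreal (sqrt (card I * (\<integral>t. (u t)\<^sup>2 \<partial>D)))"
proof -
  interpret D: prob_space D by fact
  interpret P: product_prob_space "\<lambda>_. D" I
    by unfold_locales
  interpret FP: finite_product_prob_space "\<lambda>_. D" I
    by unfold_locales (rule I)
  have u1: "integrable D u"
    by (rule D.square_integrable_imp_integrable[OF u u2])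
  define Z where "Z ts = (\<Sum>b\<in>I. u (ts b))" for ts
  have cross: "integrable (PiM I (\<lambda>_. D)) (\<lambda>ts. u (ts b) * u (ts c))
      \<and> (\<integral>ts. u (ts b) * u (ts c) \<partial>PiM I (\<lambda>_. D)) = (if b = c then (\<integral>t. (u t)\<^sup>2 \<partial>D) else 0)"
    if b: "b \<in> I" and c: "c \<in> I" for b c
  proof (cases "b = c")
    case True
    define F where "F i t = (if i = b then (u t)\<^sup>2 else 1)" for i t
    have F: "(\<Prod>i\<in>I. F i (ts i)) = u (ts b) * u (ts c)" for ts
      using b I True by (simp add: F_def prod.delta power2_eq_square)
    have Fi: "i \<in> I \<Longrightarrow> integrable D (F i)" for i
      unfolding F_def by (cases "i = b") (simp_all add: u2)
    have "integrable (PiM I (\<lambda>_. D)) (\<lambda>ts. \<Prod>i\<in>I. F i (ts i))"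
      by (rule P.product_integrable_prod[OF I Fi])
    moreover have "(\<integral>ts. (\<Prod>i\<in>I. F i (ts i)) \<partial>PiM I (\<lambda>_. D)) = (\<Prod>i\<in>I. integral\<^sup>L D (F i))"
      by (rule P.product_integral_prod[OF I Fi])
    moreover have "(\<Prod>i\<in>I. integral\<^sup>L D (F i)) = (\<integral>t. (u t)\<^sup>2 \<partial>D)"
    proof -
      have "(\<Prod>i\<in>I. integral\<^sup>L D (F i)) = (\<Prod>i\<in>I. if i = b then (\<integral>t. (u t)\<^sup>2 \<partial>D) else 1)"
        by (intro prod.cong refl) (auto simp: F_def[abs_def] D.prob_space)
      also have "\<dots> = (\<integral>t. (u t)\<^sup>2 \<partial>D)" using b I by (simp add: prod.delta)
      finally show ?thesis .
    qed
    ultimately show ?thesis using True F by simp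
  next
    case False
    define F where "F i t = (if i = b \<or> i = c then u t else 1)" for i t
    have F: "(\<Prod>i\<in>I. F i (ts i)) = u (ts b) * u (ts c)" for ts
    proof -
      have "(\<Prod>i\<in>I. F i (ts i)) = (\<Prod>i\<in>I. (if i = b then u (ts i) else 1) * (if i = c then u (ts i) else 1))"
        using False by (intro prod.cong) (auto simp: F_def)
      also have "\<dots> = u (ts b) * u (ts c)"
        using b c I by (simp add: prod.distrib prod.delta)
      finally show ?thesis .
    qed
    have Fi: "i \<in> I \<Longrightarrow> integrable D (F i)" for i
      unfolding F_def by (cases "i = b \<or> i = c") (simp_all add: u1)
    have "integrable (PiM I (\<lambda>_. D)) (\<lambda>ts. \<Prod>i\<in>I. F i (ts i))"
      by (rule P.product_integrable_prod[OF I Fi])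
    moreover have "(\<integral>ts. (\<Prod>i\<in>I. F i (ts i)) \<partial>PiM I (\<lambda>_. D)) = (\<Prod>i\<in>I. integral\<^sup>L D (F i))"
      by (rule P.product_integral_prod[OF I Fi])
    moreover have "(\<Prod>i\<in>I. integral\<^sup>L D (F i)) = 0"
    proof -
      have "integral\<^sup>L D (F b) = 0" using u0 by (simp add: F_def[abs_def])
      then show ?thesis using b I by (intro prod_zero) auto
    qed
    ultimately show ?thesis using False F by simp
  qed
  have Z2: "(Z ts)\<^sup>2 = (\<Sum>b\<in>I. \<Sum>c\<in>I. u (ts b) * u (ts c))" for ts
    by (simp add: Z_def power2_eq_square sum_product)
  have intZ2: "integrable (PiM I (\<lambda>_. D)) (\<lambda>ts. (Z ts)\<^sup>2)"
  proof -
    have "integrable (PiM I (\<lambda>_. D)) (\<lambda>ts. \<Sum>b\<in>I. \<Sum>c\<in>I. u (ts b) * u (ts c))"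
      using cross by (intro Bochner_Integration.integrable_sum) blast
    then show ?thesis unfolding Z2 .
  qed
  have valZ2: "(\<integral>ts. (Z ts)\<^sup>2 \<partial>PiM I (\<lambda>_. D)) = card I * (\<integral>t. (u t)\<^sup>2 \<partial>D)"
  proof -
    have "(\<integral>ts. (Z ts)\<^sup>2 \<partial>PiM I (\<lambda>_. D)) = (\<Sum>b\<in>I. \<Sum>c\<in>I. \<integral>ts. u (ts b) * u (ts c) \<partial>PiM I (\<lambda>_. D))"
      unfolding Z2 using cross by (simp add: integral_sum integrable_sum)
    also have "\<dots> = (\<Sum>b\<in>I. \<Sum>c\<in>I. if b = c then (\<integral>t. (u t)\<^sup>2 \<partial>D) else 0)"
      using cross by (intro sum.cong refl) auto
    also have "\<dots> = card I * (\<integral>t. (u t)\<^sup>2 \<partial>D)"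
      using I by (simp add: sum.delta)
    finally show ?thesis .
  qed
  have mZ[measurable]: "Z \<in> borel_measurable (PiM I (\<lambda>_. D))"
    unfolding Z_def by measurable
  have "(\<integral>\<^sup>+ts. ennreal \<bar>Z ts\<bar> \<partial>PiM I (\<lambda>_. D)) ^ 2
      = (\<integral>\<^sup>+ts. ennreal \<bar>Z ts\<bar> * 1 \<partial>PiM I (\<lambda>_. D)) ^ 2" by simp
  also have "\<dots> \<le> (\<integral>\<^sup>+ts. (ennreal \<bar>Z ts\<bar>) ^ 2 \<partial>PiM I (\<lambda>_. D)) * (\<integral>\<^sup>+ts. 1 ^ 2 \<partial>PiM I (\<lambda>_. D))"
    by (rule Cauchy_Schwarz_nn_integral) auto
  also have "\<dots> = (\<integral>\<^sup>+ts. ennreal ((Z ts)\<^sup>2) \<partial>PiM I (\<lambda>_. D))"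
  proof -
    have "(ennreal \<bar>z\<bar>) ^ 2 = ennreal (z\<^sup>2)" for z :: real
      by (subst ennreal_power) auto
    then show ?thesis by (simp add: P.emeasure_space_1)
  qed
  also have "\<dots> = ennreal (\<integral>ts. (Z ts)\<^sup>2 \<partial>PiM I (\<lambda>_. D))"
    by (rule nn_integral_eq_integral[OF intZ2]) auto
  finally have "(\<integral>\<^sup>+ts. ennreal \<bar>Z ts\<bar> \<partial>PiM I (\<lambda>_. D)) ^ 2 \<le> ennreal (card I * (\<integral>t. (u t)\<^sup>2 \<partial>D))"
    using valZ2 by simp
  then show ?thesis
    unfolding Z_def[symmetric] by (rule ennreal_sq_le_imp) auto
qed




lemma dTV_ge:
  assumes P: "finite_measure P" and Q: "prob_space Q" and A: "A \<in> sets P"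
  shows "\<bar>measure P A - measure Q A\<bar> \<le> dTV P Q"
proof -
  interpret P: finite_measure P by fact
  interpret Q: prob_space Q by fact
  have "bdd_above ((\<lambda>A. \<bar>measure P A - measure Q A\<bar>) ` sets P)"
  proof (rule bdd_aboveI2)
    fix A assume "A \<in> sets P"
    have "measure P A \<le> measure P (space P)" by (rule P.bounded_measure)
    moreover have "measure Q A \<le> 1" by (rule Q.prob_le_1)
    ultimately show "\<bar>measure P A - measure Q A\<bar> \<le> measure P (space P) + 1"
      using measure_nonneg[of P A] measure_nonneg[of Q A] measure_nonneg[of P "space P"] Q.prob_le_1[of A] unfolding abs_le_iff by linarith
  qed
  then show ?thesis unfolding dTV_def using A by (rule cSUP_upper2) simp
qed

lemma dTV_nonneg:
  assumes P: "finite_measure P" and Q: "prob_space Q"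
  shows "0 \<le> dTV P Q"
  using dTV_ge[OF P Q sets.empty_sets[of P]] by simp

lemma dTV_le:
  assumes "\<And>A. A \<in> sets P \<Longrightarrow> \<bar>measure P A - measure Q A\<bar> \<le> c"
  shows "dTV P Q \<le> c"
  unfolding dTV_def using assms by (intro cSUP_least) auto

lemma L1_le_dTV:
  fixes a b :: "'x \<Rightarrow> real"
  assumes a[measurable]: "a \<in> borel_measurable MX" and b[measurable]: "b \<in> borel_measurable MX"
    and a0: "\<And>x. x \<in> space MX \<Longrightarrow> 0 \<le> a x" and b0: "\<And>x. x \<in> space MX \<Longrightarrow> 0 \<le> b x"
    and a1: "(\<integral>\<^sup>+x. ennreal (a x) \<partial>MX) = 1" and b1: "(\<integral>\<^sup>+x. ennreal (b x) \<partial>MX) = 1"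
  shows "(\<integral>\<^sup>+x. ennreal \<bar>a x - b x\<bar> \<partial>MX) \<le> 2 * ennreal (dTV (density MX a) (density MX b))"
proof -
  define S where "S = {x\<in>space MX. b x < a x}"
  have S[measurable]: "S \<in> sets MX" unfolding S_def by measurable
  define Sc where "Sc = space MX - S"
  have Sc[measurable]: "Sc \<in> sets MX" unfolding Sc_def by measurable
  define \<alpha> where "\<alpha> = (\<integral>\<^sup>+x. ennreal (a x) * indicator S x \<partial>MX)"
  define \<beta> where "\<beta> = (\<integral>\<^sup>+x. ennreal (b x) * indicator S x \<partial>MX)"
  define \<alpha>' where "\<alpha>' = (\<integral>\<^sup>+x. ennreal (a x) * indicator Sc x \<partial>MX)"
  define \<beta>' where "\<beta>' = (\<integral>\<^sup>+x. ennreal (b x) * indicator Sc x \<partial>MX)"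
  define \<gamma> where "\<gamma> = (\<integral>\<^sup>+x. ennreal (a x - b x) \<partial>MX)"
  define \<gamma>' where "\<gamma>' = (\<integral>\<^sup>+x. ennreal (b x - a x) \<partial>MX)"
  have split: "ennreal (g x) = ennreal (g x) * indicator S x + ennreal (g x) * indicator Sc x"
    if "x \<in> space MX" for g :: "'x \<Rightarrow> real" and x
    using that by (auto simp: Sc_def indicator_def)
  have aa: "\<alpha> + \<alpha>' = 1"
  proof -
    have "\<alpha> + \<alpha>' = (\<integral>\<^sup>+x. ennreal (a x) * indicator S x + ennreal (a x) * indicator Sc x \<partial>MX)"
      unfolding \<alpha>_def \<alpha>'_def by (rule nn_integral_add[symmetric]) auto
    also have "\<dots> = 1" using a1 split[of _ a] by (metis (no_types, lifting) nn_integral_cong)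
    finally show ?thesis .
  qed
  have bb: "\<beta> + \<beta>' = 1"
  proof -
    have "\<beta> + \<beta>' = (\<integral>\<^sup>+x. ennreal (b x) * indicator S x + ennreal (b x) * indicator Sc x \<partial>MX)"
      unfolding \<beta>_def \<beta>'_def by (rule nn_integral_add[symmetric]) auto
    also have "\<dots> = 1" using b1 split[of _ b] by (metis (no_types, lifting) nn_integral_cong)
    finally show ?thesis .
  qed
  have ag: "\<alpha> = \<beta> + \<gamma>"
  proof -
    have "\<beta> + \<gamma> = (\<integral>\<^sup>+x. ennreal (b x) * indicator S x + ennreal (a x - b x) \<partial>MX)"
      unfolding \<beta>_def \<gamma>_def by (rule nn_integral_add[symmetric]) auto
    also have "\<dots> = \<alpha>" unfolding \<alpha>_def
      using a0 b0 by (intro nn_integral_cong) (auto simp: S_def indicator_def ennreal_plus[symmetric] ennreal_neg simp del: ennreal_plus)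
    finally show ?thesis by simp
  qed
  have bg: "\<beta>' = \<alpha>' + \<gamma>'"
  proof -
    have "\<alpha>' + \<gamma>' = (\<integral>\<^sup>+x. ennreal (a x) * indicator Sc x + ennreal (b x - a x) \<partial>MX)"
      unfolding \<alpha>'_def \<gamma>'_def by (rule nn_integral_add[symmetric]) auto
    also have "\<dots> = \<beta>'" unfolding \<beta>'_def
      using a0 b0 by (intro nn_integral_cong) (auto simp: S_def Sc_def indicator_def ennreal_plus[symmetric] ennreal_neg simp del: ennreal_plus)
    finally show ?thesis by simp
  qed
  have fin: "\<alpha> \<noteq> \<top>" "\<alpha>' \<noteq> \<top>" "\<beta> \<noteq> \<top>" "\<beta>' \<noteq> \<top>"
    using aa bb by (auto simp: top_add)
  have gg: "\<gamma>' = \<gamma>"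
  proof -
    have "(\<alpha>' + \<beta>) + \<gamma>' = (\<alpha>' + \<beta>) + \<gamma>"
      using aa bb ag bg by (metis add.assoc add.commute)
    then show ?thesis using fin by (simp add: ennreal_add_left_cancel top_add)
  qed
  have "(\<integral>\<^sup>+x. ennreal \<bar>a x - b x\<bar> \<partial>MX) = (\<integral>\<^sup>+x. ennreal (a x - b x) + ennreal (b x - a x) \<partial>MX)"
    by (intro nn_integral_cong) (auto simp: abs_if ennreal_neg)
  also have "\<dots> = \<gamma> + \<gamma>'" unfolding \<gamma>_def \<gamma>'_def by (rule nn_integral_add) auto
  also have "\<dots> = 2 * \<gamma>" using gg by (simp add: mult_2)
  also have "\<gamma> \<le> ennreal (dTV (density MX a) (density MX b))"
  proof -
    have Pa: "prob_space (density MX a)"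
      by (rule prob_spaceI) (auto simp: emeasure_density a1[symmetric] intro!: nn_integral_cong)
    have Pb: "prob_space (density MX b)"
      by (rule prob_spaceI) (auto simp: emeasure_density b1[symmetric] intro!: nn_integral_cong)
    have ea: "emeasure (density MX a) S = \<alpha>" unfolding \<alpha>_def by (simp add: emeasure_density)
    have eb: "emeasure (density MX b) S = \<beta>" unfolding \<beta>_def by (simp add: emeasure_density)
    have "\<gamma> = ennreal (enn2real \<alpha> - enn2real \<beta>)"
      using ag fin by (cases \<beta>; cases \<gamma>) (auto simp: ennreal_plus[symmetric] simp del: ennreal_plus)
    also have "enn2real \<alpha> - enn2real \<beta> = measure (density MX a) S - measure (density MX b) S"
      by (simp add: measure_def ea eb)
    also have "\<dots> \<le> dTV (density MX a) (density MX b)"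
      using dTV_ge[OF prob_space.finite_measure[OF Pa] Pb, of S] by simp
    finally show ?thesis by (simp add: ennreal_leI)
  qed
  then have "2 * \<gamma> \<le> 2 * ennreal (dTV (density MX a) (density MX b))"
    by (rule mult_left_mono) simp
  finally show ?thesis .
qed

lemma measurable_density_kernel:
  fixes g :: "'a \<Rightarrow> 'b \<Rightarrow> ennreal"
  assumes sf: "sigma_finite_measure N" and ne: "space N \<noteq> {}"
    and g[measurable]: "(\<lambda>(x, y). g x y) \<in> borel_measurable (M \<Otimes>\<^sub>M N)"
    and le1: "\<And>x. x \<in> space M \<Longrightarrow> (\<integral>\<^sup>+y. g x y \<partial>N) \<le> 1"
  shows "(\<lambda>x. density N (g x)) \<in> M \<rightarrow>\<^sub>M subprob_algebra N"
proof (rule measurable_subprob_algebra)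
  fix x assume x: "x \<in> space M"
  show "subprob_space (density N (g x))"
  proof (intro subprob_spaceI)
    have "emeasure (density N (g x)) (space N) = (\<integral>\<^sup>+y. g x y \<partial>N)"
      using x by (subst emeasure_density) (auto intro!: nn_integral_cong)
    then show "emeasure (density N (g x)) (space (density N (g x))) \<le> 1" using le1[OF x] by simp
    show "space (density N (g x)) \<noteq> {}" using ne by simp
  qed
  show "sets (density N (g x)) = sets N" by simp
next
  interpret sigma_finite_measure N by fact
  fix A assume A[measurable]: "A \<in> sets N"
  have "(\<lambda>x. \<integral>\<^sup>+y. g x y * indicator A y \<partial>N) \<in> borel_measurable M"
    by measurable
  moreover have "x \<in> space M \<Longrightarrow> emeasure (density N (g x)) A = (\<integral>\<^sup>+y. g x y * indicator A y \<partial>N)" for x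
    by (subst emeasure_density) auto
  ultimately show "(\<lambda>x. emeasure (density N (g x)) A) \<in> borel_measurable M"
    by (subst measurable_cong) auto
qed




locale th2 =
  fixes MX :: "'x measure" and MT :: "'t measure"
    and f :: "'t \<Rightarrow> 'x \<Rightarrow> real" and pr :: "'t \<Rightarrow> real"
    and B M :: nat and \<theta>0 :: 't
    and Q :: "'x \<Rightarrow> (nat \<Rightarrow> 't) \<Rightarrow> (nat \<Rightarrow> 'x) measure"
  assumes sfX: "sigma_finite_measure MX" and sfT: "sigma_finite_measure MT"
    and f_meas: "(\<lambda>(\<theta>, x). f \<theta> x) \<in> borel_measurable (MT \<Otimes>\<^sub>M MX)"
    and f_nonneg: "\<And>\<theta> x. \<theta> \<in> space MT \<Longrightarrow> x \<in> space MX \<Longrightarrow> 0 \<le> f \<theta> x"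
    and f_dens: "\<And>\<theta>. \<theta> \<in> space MT \<Longrightarrow> (\<integral>\<^sup>+ x. ennreal (f \<theta> x) \<partial>MX) = 1"
    and pi_dens: "is_density MT pr"
    and pi_pos: "\<And>\<theta>. \<theta> \<in> space MT \<Longrightarrow> 0 < pr \<theta>"
    and pi_supp: "supp_cover MX MT f pr"
    and B: "1 \<le> B" and M: "1 \<le> M"
    and Q_kernel: "(\<lambda>(x, ts). Q x ts) \<in> MX \<Otimes>\<^sub>M PiM {1..B} (\<lambda>_. MT)
                      \<rightarrow>\<^sub>M prob_algebra (PiM {1..M} (\<lambda>_. MX))"
    and Q_exch: "\<And>ts. ts \<in> space (PiM {1..B} (\<lambda>_. MT)) \<Longrightarrow>
        0 < g_const MX MT f pr B ts \<Longrightarrow> g_const MX MT f pr B ts < \<infinity> \<Longrightarrow>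
        exchangeable {0..M}
          (joint_law MX M (density MX (g_dens MX MT f pr B ts)) (\<lambda>x. Q x ts))"
    and \<theta>0: "\<theta>0 \<in> space MT"
begin

abbreviation "T \<equiv> PiM {1..B} (\<lambda>_. MT)"
abbreviation "PX \<equiv> PiM {0..M} (\<lambda>_. MX)"
abbreviation "PY \<equiv> PiM {1..M} (\<lambda>_. MX)"

definition Ien :: "('t \<Rightarrow> real) \<Rightarrow> 'x \<Rightarrow> ennreal" where
  "Ien rho x = (\<integral>\<^sup>+\<theta>. ennreal (rho \<theta> * f \<theta> x) \<partial>MT)"

abbreviation "post \<equiv> post_dens MT f pr"

definition Fpost :: "'x \<Rightarrow> (nat \<Rightarrow> 't) \<Rightarrow> real" where
  "Fpost x ts = (\<Prod>b\<in>{1..B}. post x (ts b))"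

definition kk :: "(nat \<Rightarrow> 'x) set \<Rightarrow> 'x \<Rightarrow> (nat \<Rightarrow> 't) \<Rightarrow> ennreal" where
  "kk A x ts = (\<integral>\<^sup>+y. indicator A (y(0 := x)) \<partial>Q x ts)"

lemma sfX': "sigma_finite_measure MX" and sfT': "sigma_finite_measure MT"
  using sfX sfT .

lemma f_meas'[measurable]: "(\<lambda>(x, \<theta>). f \<theta> x) \<in> borel_measurable (MX \<Otimes>\<^sub>M MT)"
  using measurable_pair_swap[OF f_meas] by simp

lemma f_meas2[measurable]: "(\<lambda>p. f (snd p) (fst p)) \<in> borel_measurable (MX \<Otimes>\<^sub>M MT)"
  using f_meas' by (simp add: case_prod_beta)

lemma spaceMX: "space MX \<noteq> {}"
proof
  assume "space MX = {}"
  then have "(\<integral>\<^sup>+ x. ennreal (f \<theta>0 x) \<partial>MX) = 0" by (simp add: nn_integral_empty)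
  with f_dens[OF \<theta>0] show False by simp
qed

lemma spaceT: "space T \<noteq> {}"
  using \<theta>0 by (auto simp: space_PiM PiE_eq_empty_iff)

lemma Ien_meas[measurable]:
  assumes [measurable]: "rho \<in> borel_measurable MT"
  shows "Ien rho \<in> borel_measurable MX"
proof -
  interpret sigma_finite_measure MT by (rule sfT)
  show ?thesis unfolding Ien_def by measurable
qed

lemma fbar_meas[measurable]:
  assumes [measurable]: "rho \<in> borel_measurable MT"
  shows "fbar MT f rho \<in> borel_measurable MX"
proof -
  have "fbar MT f rho = (\<lambda>x. enn2real (Ien rho x))"
    by (auto simp: fbar_def Ien_def fun_eq_iff)
  then show ?thesis by simp
qed

lemma pr_meas[measurable]: "pr \<in> borel_measurable MT"
  using pi_dens by (simp add: is_density_def)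

lemma post_meas[measurable]: "(\<lambda>(x, \<theta>). post x \<theta>) \<in> borel_measurable (MX \<Otimes>\<^sub>M MT)"
  unfolding post_dens_def by measurable

lemma Fpost_meas[measurable]: "(\<lambda>(x, ts). Fpost x ts) \<in> borel_measurable (MX \<Otimes>\<^sub>M T)"
  unfolding Fpost_def by measurable

lemma rho_nonneg: "is_density MT rho \<Longrightarrow> \<theta> \<in> space MT \<Longrightarrow> 0 \<le> rho \<theta>"
  by (simp add: is_density_def)

lemma Ien_integral:
  assumes rho: "is_density MT rho"
  shows "(\<integral>\<^sup>+x. Ien rho x \<partial>MX) = 1"
proof -
  have [measurable]: "rho \<in> borel_measurable MT" using rho by (simp add: is_density_def)
  interpret P: pair_sigma_finite MX MT
    by (intro pair_sigma_finite.intro sfX sfT)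
  have "(\<integral>\<^sup>+x. Ien rho x \<partial>MX) = (\<integral>\<^sup>+x. \<integral>\<^sup>+\<theta>. ennreal (rho \<theta> * f \<theta> x) \<partial>MT \<partial>MX)"
    by (simp add: Ien_def)
  also have "\<dots> = (\<integral>\<^sup>+\<theta>. \<integral>\<^sup>+x. ennreal (rho \<theta> * f \<theta> x) \<partial>MX \<partial>MT)"
    by (rule P.Fubini'[symmetric]) measurable
  also have "\<dots> = (\<integral>\<^sup>+\<theta>. ennreal (rho \<theta>) * \<integral>\<^sup>+x. ennreal (f \<theta> x) \<partial>MX \<partial>MT)"
    using rho_nonneg[OF rho] f_nonneg
    by (intro nn_integral_cong) (auto simp: ennreal_mult nn_integral_cmult[symmetric] intro!: nn_integral_cong)
  also have "\<dots> = (\<integral>\<^sup>+\<theta>. ennreal (rho \<theta>) \<partial>MT)"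
    using f_dens by (intro nn_integral_cong) simp
  also have "\<dots> = 1" using rho by (simp add: is_density_def)
  finally show ?thesis .
qed

lemma Ien_fin:
  assumes rho: "is_density MT rho"
  shows "AE x in MX. Ien rho x \<noteq> \<infinity>"
proof -
  have [measurable]: "rho \<in> borel_measurable MT" using rho by (simp add: is_density_def)
  show ?thesis
    by (rule nn_integral_noteq_infinite) (auto simp: Ien_integral[OF rho])
qed

lemma Ien_eq: "Ien rho x \<noteq> \<infinity> \<Longrightarrow> Ien rho x = ennreal (fbar MT f rho x)"
  by (simp add: fbar_def Ien_def less_top[symmetric])

lemma fbar_nonneg: "0 \<le> fbar MT f rho x"
  by (simp add: fbar_def)

lemma fbar_pos_fin: "0 < fbar MT f rho x \<Longrightarrow> Ien rho x = ennreal (fbar MT f rho x)"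
  by (intro Ien_eq) (auto simp: fbar_def Ien_def)

lemma post_nonneg: "\<theta> \<in> space MT \<Longrightarrow> x \<in> space MX \<Longrightarrow> 0 \<le> post x \<theta>"
  unfolding post_dens_def using pi_pos f_nonneg fbar_nonneg
  by (intro divide_nonneg_nonneg mult_nonneg_nonneg) (auto intro: less_imp_le)

lemma post_integral:
  assumes x: "x \<in> space MX"
  shows "(\<integral>\<^sup>+\<theta>. ennreal (post x \<theta>) \<partial>MT) = (if 0 < fbar MT f pr x then 1 else 0)"
proof (cases "0 < fbar MT f pr x")
  case True
  have "(\<integral>\<^sup>+\<theta>. ennreal (post x \<theta>) \<partial>MT) = (\<integral>\<^sup>+\<theta>. ennreal (pr \<theta> * f \<theta> x) * ennreal (1 / fbar MT f pr x) \<partial>MT)"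
    using True pi_pos f_nonneg x
    by (intro nn_integral_cong) (auto simp: post_dens_def ennreal_mult[symmetric] less_imp_le)
  also have "\<dots> = Ien pr x * ennreal (1 / fbar MT f pr x)"
    unfolding Ien_def by (rule nn_integral_multc) (use x in measurable)
  also have "\<dots> = 1"
    using True by (simp add: fbar_pos_fin ennreal_mult[symmetric])
  finally show ?thesis using True by simp
next
  case False
  then have "fbar MT f pr x = 0" using fbar_nonneg[of pr x] by simp
  then show ?thesis by (simp add: post_dens_def)
qed

lemma Fpost_nonneg: "ts \<in> space T \<Longrightarrow> x \<in> space MX \<Longrightarrow> 0 \<le> Fpost x ts"
  unfolding Fpost_def by (intro prod_nonneg post_nonneg) (auto simp: space_PiM)

lemma Fpost_integral:
  assumes x: "x \<in> space MX"
  shows "(\<integral>\<^sup>+ts. ennreal (Fpost x ts) \<partial>T) = (if 0 < fbar MT f pr x then 1 else 0)"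
proof -
  interpret PN: product_sigma_finite "\<lambda>_. MT"
    unfolding product_sigma_finite_def using sfT by simp
  have "(\<integral>\<^sup>+ts. ennreal (Fpost x ts) \<partial>T) = (\<integral>\<^sup>+ts. (\<Prod>b\<in>{1..B}. ennreal (post x (ts b))) \<partial>T)"
    using x by (intro nn_integral_cong) (auto simp: Fpost_def space_PiM PiE_mem intro!: prod_ennreal[symmetric] post_nonneg)
  also have "\<dots> = (\<Prod>b\<in>{1..B}. \<integral>\<^sup>+\<theta>. ennreal (post x \<theta>) \<partial>MT)"
    by (rule PN.product_nn_integral_prod) (use x in auto)
  also have "\<dots> = (if 0 < fbar MT f pr x then 1 else 0)"
    using x B by (simp add: post_integral)
  finally show ?thesis .
qed

lemma Px_eq:
  assumes x: "x \<in> space MX"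
  shows "PiM {1..B} (\<lambda>_. density MT (post x)) = density T (\<lambda>ts. ennreal (Fpost x ts))"
proof -
  have "PiM {1..B} (\<lambda>_. density MT (post x)) = density T (\<lambda>ts. \<Prod>b\<in>{1..B}. ennreal (post x (ts b)))"
    using x by (intro PiM_density sfT) (auto simp: post_integral)
  also have "\<dots> = density T (\<lambda>ts. ennreal (Fpost x ts))"
    using x by (intro density_cong AE_I2) (auto simp: Fpost_def space_PiM PiE_mem intro!: prod_ennreal post_nonneg)
  finally show ?thesis .
qed

lemma Px_kernel: "(\<lambda>x. density T (\<lambda>ts. ennreal (Fpost x ts))) \<in> MX \<rightarrow>\<^sub>M subprob_algebra T"
proof (rule measurable_density_kernel)
  show "sigma_finite_measure T"
    by (rule product_sigma_finite.sigma_finite) (auto simp: product_sigma_finite_def sfT)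
  show "space T \<noteq> {}" by (rule spaceT)
  show "(\<lambda>(x, ts). ennreal (Fpost x ts)) \<in> borel_measurable (MX \<Otimes>\<^sub>M T)" by measurable
  show "x \<in> space MX \<Longrightarrow> (\<integral>\<^sup>+ts. ennreal (Fpost x ts) \<partial>T) \<le> 1" for x
    by (subst Fpost_integral) auto
qed

lemma upd_meas[measurable]: "(\<lambda>(x, y). y(0 := x)) \<in> MX \<Otimes>\<^sub>M PY \<rightarrow>\<^sub>M PX"
proof -
  have m: "(\<lambda>\<omega> i. (if i = 0 then fst \<omega> else snd \<omega> i)) \<in> MX \<Otimes>\<^sub>M PY \<rightarrow>\<^sub>M PX"
  proof (rule measurable_PiM_single')
    fix i assume i: "i \<in> {0..M}"
    show "(\<lambda>\<omega>. if i = 0 then fst \<omega> else snd \<omega> i) \<in> MX \<Otimes>\<^sub>M PY \<rightarrow>\<^sub>M MX"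
    proof (cases "i = 0")
      case True then show ?thesis by simp
    next
      case False
      then have "i \<in> {1..M}" using i by auto
      then show ?thesis using False by simp
    qed
  next
    show "(\<lambda>\<omega> i. if i = 0 then fst \<omega> else snd \<omega> i) \<in> space (MX \<Otimes>\<^sub>M PY) \<rightarrow> {0..M} \<rightarrow>\<^sub>E space MX"
      by (auto simp: space_pair_measure space_PiM PiE_iff extensional_def)
  qed
  have e: "(\<lambda>(x, y). y(0 := x)) = (\<lambda>\<omega> i. (if i = 0 then fst \<omega> else snd \<omega> i))"
    by (auto simp: fun_eq_iff)
  show ?thesis unfolding e by (rule m)
qed

lemma upd_space:
  assumes "x \<in> space MX" "y \<in> space PY" shows "y(0 := x) \<in> space PX"
proof -
  have "(x, y) \<in> space (MX \<Otimes>\<^sub>M PY)" using assms by (simp only: space_pair_measure SigmaI)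
  from measurable_space[OF upd_meas this] show ?thesis by (simp only: case_prod_conv)
qed

lemma Q_kernel'[measurable]: "(\<lambda>(x, ts). Q x ts) \<in> MX \<Otimes>\<^sub>M T \<rightarrow>\<^sub>M subprob_algebra PY"
  using measurable_prob_algebraD[OF Q_kernel] .

lemma Q_prob:
  assumes "x \<in> space MX" "ts \<in> space T" shows "prob_space (Q x ts) \<and> sets (Q x ts) = sets PY"
proof -
  have "(x, ts) \<in> space (MX \<Otimes>\<^sub>M T)" using assms by (simp only: space_pair_measure SigmaI)
  from measurable_space[OF Q_kernel this] show ?thesis by (simp only: case_prod_conv space_prob_algebra mem_Collect_eq conj_commute)
qed

lemma kk_meas:
  assumes A: "A \<in> sets PX"
  shows "(\<lambda>(x, ts). kk A x ts) \<in> borel_measurable (MX \<Otimes>\<^sub>M T)"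
proof -
  have p: "(\<lambda>p. (fst (fst p), snd p)) \<in> (MX \<Otimes>\<^sub>M T) \<Otimes>\<^sub>M PY \<rightarrow>\<^sub>M MX \<Otimes>\<^sub>M PY"
    by (intro measurable_Pair measurable_compose[OF measurable_fst measurable_fst] measurable_snd)
  have u: "(\<lambda>p. (snd p)(0 := fst (fst p))) \<in> (MX \<Otimes>\<^sub>M T) \<Otimes>\<^sub>M PY \<rightarrow>\<^sub>M PX"
    using measurable_compose[OF p upd_meas] by (simp add: case_prod_beta)
  have "(\<lambda>p. indicator A ((snd p)(0 := fst (fst p))) :: ennreal) \<in> borel_measurable ((MX \<Otimes>\<^sub>M T) \<Otimes>\<^sub>M PY)"
    by (rule measurable_compose[OF u borel_measurable_indicator[OF A]])
  then have "(\<lambda>(z, y). indicator A (y(0 := fst z)) :: ennreal) \<in> borel_measurable ((MX \<Otimes>\<^sub>M T) \<Otimes>\<^sub>M PY)"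
    by (simp add: case_prod_beta')
  then have m: "(\<lambda>z. \<integral>\<^sup>+y. indicator A (y(0 := fst z)) \<partial>(case z of (x, ts) \<Rightarrow> Q x ts)) \<in> borel_measurable (MX \<Otimes>\<^sub>M T)"
    by (rule nn_integral_measurable_subprob_algebra2[OF _ Q_kernel'])
  have e: "(\<lambda>(x, ts). kk A x ts) = (\<lambda>z. \<integral>\<^sup>+y. indicator A (y(0 := fst z)) \<partial>(case z of (x, ts) \<Rightarrow> Q x ts))"
    by (auto simp: kk_def fun_eq_iff)
  show ?thesis unfolding e by (rule m)
qed

lemma kk_le1: "x \<in> space MX \<Longrightarrow> ts \<in> space T \<Longrightarrow> kk A x ts \<le> 1"
proof -
  assume x: "x \<in> space MX" and ts: "ts \<in> space T"
  interpret prob_space "Q x ts" using Q_prob[OF x ts] by simp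
  have "kk A x ts \<le> (\<integral>\<^sup>+y. 1 \<partial>Q x ts)"
    unfolding kk_def by (intro nn_integral_mono) (simp add: indicator_def)
  also have "\<dots> = 1" by (simp add: emeasure_space_1)
  finally show ?thesis .
qed

lemma kk_space: "x \<in> space MX \<Longrightarrow> ts \<in> space T \<Longrightarrow> kk (space PX) x ts = 1"
proof -
  assume x: "x \<in> space MX" and ts: "ts \<in> space T"
  interpret prob_space "Q x ts" using Q_prob[OF x ts] by simp
  have sp: "space (Q x ts) = space PY" using Q_prob[OF x ts] by (intro sets_eq_imp_space_eq) blast
  have i1: "indicator (space PX) (y(0 := x)) = (1::ennreal)" if "y \<in> space (Q x ts)" for y
    using upd_space[OF x, of y] that unfolding sp by (simp only: indicator_simps)
  have "kk (space PX) x ts = (\<integral>\<^sup>+y. 1 \<partial>Q x ts)"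
    unfolding kk_def by (rule nn_integral_cong) (rule i1)
  also have "\<dots> = 1" by (simp add: emeasure_space_1)
  finally show ?thesis .
qed

lemma tsT: "ts \<in> space T \<Longrightarrow> b \<in> {1..B} \<Longrightarrow> ts b \<in> space MT"
  by (auto simp: space_PiM)

lemma kk_meas_ts:
  assumes x: "x \<in> space MX" and A: "A \<in> sets PX"
  shows "(\<lambda>ts. kk A x ts) \<in> borel_measurable T"
  using measurable_Pair2[OF kk_meas[OF A] x] by simp

lemma kk_meas_x:
  assumes ts: "ts \<in> space T" and A: "A \<in> sets PX"
  shows "(\<lambda>x. kk A x ts) \<in> borel_measurable MX"
  using measurable_Pair1[OF kk_meas[OF A] ts] by simp

lemma spacePY: "space PY \<noteq> {}"
  using spaceMX by (auto simp: space_PiM PiE_eq_empty_iff)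

lemma ret_kernel: "(\<lambda>(x, y). return PX (y(0 := x))) \<in> MX \<Otimes>\<^sub>M PY \<rightarrow>\<^sub>M subprob_algebra PX"
proof -
  have e: "(\<lambda>(x, y). return PX (y(0 := x))) = (\<lambda>z. return PX ((\<lambda>(x, y). y(0 := x)) z))"
    by (auto simp: fun_eq_iff)
  show ?thesis unfolding e by (rule measurable_compose[OF upd_meas return_measurable])
qed

lemma ret_kernel_x:
  assumes x: "x \<in> space MX"
  shows "(\<lambda>y. return PX (y(0 := x))) \<in> PY \<rightarrow>\<^sub>M subprob_algebra PX"
proof -
  have "(\<lambda>y. (\<lambda>(x, y). return PX (y(0 := x))) (x, y)) \<in> PY \<rightarrow>\<^sub>M subprob_algebra PX"
    by (rule measurable_Pair2[OF ret_kernel x])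
  then show ?thesis by simp
qed

lemma Q_kernel_x:
  assumes x: "x \<in> space MX"
  shows "(\<lambda>ts. Q x ts) \<in> T \<rightarrow>\<^sub>M subprob_algebra PY"
proof -
  have "(\<lambda>ts. (\<lambda>(x, ts). Q x ts) (x, ts)) \<in> T \<rightarrow>\<^sub>M subprob_algebra PY"
    by (rule measurable_Pair2[OF Q_kernel' x])
  then show ?thesis by simp
qed

lemma Q_kernel_ts:
  assumes ts: "ts \<in> space T"
  shows "(\<lambda>x. Q x ts) \<in> MX \<rightarrow>\<^sub>M subprob_algebra PY"
proof -
  have "(\<lambda>x. (\<lambda>(x, ts). Q x ts) (x, ts)) \<in> MX \<rightarrow>\<^sub>M subprob_algebra PY"
    by (rule measurable_Pair1[OF Q_kernel' ts])
  then show ?thesis by simp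
qed

lemma kk_alt:
  assumes x: "x \<in> space MX" and ts: "ts \<in> space T" and A: "A \<in> sets PX"
  shows "emeasure (Q x ts \<bind> (\<lambda>y. return PX (y(0 := x)))) A = kk A x ts"
proof -
  have sQ: "sets (Q x ts) = sets PY" using Q_prob[OF x ts] by blast
  have sp: "space (Q x ts) \<noteq> {}"
    using Q_prob[OF x ts] prob_space.not_empty by blast
  have rk: "(\<lambda>y. return PX (y(0 := x))) \<in> Q x ts \<rightarrow>\<^sub>M subprob_algebra PX"
    using ret_kernel_x[OF x] by (simp only: measurable_cong_sets[OF sQ refl])
  have "emeasure (Q x ts \<bind> (\<lambda>y. return PX (y(0 := x)))) A = (\<integral>\<^sup>+y. emeasure (return PX (y(0 := x))) A \<partial>Q x ts)"
    by (rule emeasure_bind[OF sp rk A])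
  also have "\<dots> = kk A x ts"
    unfolding kk_def using A by (intro nn_integral_cong) simp
  finally show ?thesis .
qed

abbreviation "Lm \<equiv> joint_law MX M (density MX (f \<theta>0))
   (\<lambda>x. PiM {1..B} (\<lambda>_. density MT (post_dens MT f pr x)) \<bind> (\<lambda>ts. Q x ts))"

abbreviation "Dx x \<equiv> density T (\<lambda>ts. ennreal (Fpost x ts))"

definition K1 :: "'x \<Rightarrow> (nat \<Rightarrow> 'x) measure" where
  "K1 x = (Dx x \<bind> (\<lambda>ts. Q x ts)) \<bind> (\<lambda>y. return PX (y(0 := x)))"

lemma fth0_meas[measurable]: "f \<theta>0 \<in> borel_measurable MX"
  using measurable_Pair2[OF f_meas \<theta>0] by simp

lemma Lm_eq: "Lm = density MX (f \<theta>0) \<bind> K1"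
  unfolding joint_law_def
proof (rule bind_cong[OF refl])
  fix x assume "x \<in> space (density MX (f \<theta>0))"
  then have x: "x \<in> space MX" by simp
  show "PiM {1..B} (\<lambda>_. density MT (post_dens MT f pr x)) \<bind> (\<lambda>ts. Q x ts) \<bind> (\<lambda>y. return PX (y(0 := x)))
      = K1 x"
    unfolding K1_def by (subst Px_eq[OF x]) (rule refl)
qed

lemma K0_meas: "(\<lambda>x. Dx x \<bind> (\<lambda>ts. Q x ts)) \<in> MX \<rightarrow>\<^sub>M subprob_algebra PY"
  by (rule measurable_bind'[OF Px_kernel Q_kernel'])

lemma K1_meas: "K1 \<in> MX \<rightarrow>\<^sub>M subprob_algebra PX"
proof -
  have "(\<lambda>x. (Dx x \<bind> (\<lambda>ts. Q x ts)) \<bind> (\<lambda>y. return PX (y(0 := x)))) \<in> MX \<rightarrow>\<^sub>M subprob_algebra PX"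
    by (rule measurable_bind'[OF K0_meas ret_kernel])
  then show ?thesis unfolding K1_def[abs_def] .
qed

lemma K1_emeasure:
  assumes x: "x \<in> space MX" and A: "A \<in> sets PX"
  shows "emeasure (K1 x) A = (\<integral>\<^sup>+ts. ennreal (Fpost x ts) * kk A x ts \<partial>T)"
proof -
  have K0x: "Dx x \<bind> (\<lambda>ts. Q x ts) \<in> space (subprob_algebra PY)"
    using measurable_space[OF K0_meas x] .
  then have s0: "sets (Dx x \<bind> (\<lambda>ts. Q x ts)) = sets PY" by (simp add: space_subprob_algebra)
  have sp0: "space (Dx x \<bind> (\<lambda>ts. Q x ts)) \<noteq> {}"
    using K0x by (auto simp: space_subprob_algebra dest: subprob_space.subprob_not_empty)
  have rk: "(\<lambda>y. return PX (y(0 := x))) \<in> (Dx x \<bind> (\<lambda>ts. Q x ts)) \<rightarrow>\<^sub>M subprob_algebra PX"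
    using ret_kernel_x[OF x] by (simp only: measurable_cong_sets[OF s0 refl])
  have ind: "(\<lambda>y. indicator A (y(0 := x)) :: ennreal) \<in> borel_measurable PY"
  proof -
    have "(\<lambda>y. (\<lambda>(x, y). y(0 := x)) (x, y)) \<in> PY \<rightarrow>\<^sub>M PX"
      by (rule measurable_Pair2[OF upd_meas x])
    then have "(\<lambda>y. y(0 := x)) \<in> PY \<rightarrow>\<^sub>M PX" by simp
    from measurable_compose[OF this borel_measurable_indicator[OF A]] show ?thesis .
  qed
  have Qx: "(\<lambda>ts. Q x ts) \<in> Dx x \<rightarrow>\<^sub>M subprob_algebra PY"
    using Q_kernel_x[OF x] by (simp only: measurable_cong_sets[OF sets_density refl])
  have "emeasure (K1 x) A = (\<integral>\<^sup>+y. emeasure (return PX (y(0 := x))) A \<partial>(Dx x \<bind> (\<lambda>ts. Q x ts)))"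
    unfolding K1_def by (rule emeasure_bind[OF sp0 rk A])
  also have "\<dots> = (\<integral>\<^sup>+y. indicator A (y(0 := x)) \<partial>(Dx x \<bind> (\<lambda>ts. Q x ts)))"
    using A by (intro nn_integral_cong) simp
  also have "\<dots> = (\<integral>\<^sup>+ts. \<integral>\<^sup>+y. indicator A (y(0 := x)) \<partial>Q x ts \<partial>Dx x)"
    by (rule nn_integral_bind[OF ind Qx])
  also have "\<dots> = (\<integral>\<^sup>+ts. kk A x ts \<partial>Dx x)"
    by (simp add: kk_def)
  also have "\<dots> = (\<integral>\<^sup>+ts. ennreal (Fpost x ts) * kk A x ts \<partial>T)"
    by (rule nn_integral_density) (use kk_meas_ts[OF x A] measurable_Pair2[OF Fpost_meas x] in simp_all)
  finally show ?thesis .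
qed

lemma Lm_emeasure:
  assumes A: "A \<in> sets PX"
  shows "emeasure Lm A = (\<integral>\<^sup>+x. ennreal (f \<theta>0 x) * \<integral>\<^sup>+ts. ennreal (Fpost x ts) * kk A x ts \<partial>T \<partial>MX)"
proof -
  have K1': "K1 \<in> density MX (f \<theta>0) \<rightarrow>\<^sub>M subprob_algebra PX"
    using K1_meas by (simp only: measurable_cong_sets[OF sets_density refl])
  have "emeasure Lm A = (\<integral>\<^sup>+x. emeasure (K1 x) A \<partial>density MX (f \<theta>0))"
    unfolding Lm_eq by (rule emeasure_bind[OF _ K1' A]) (simp add: spaceMX)
  also have "\<dots> = (\<integral>\<^sup>+x. ennreal (f \<theta>0 x) * emeasure (K1 x) A \<partial>MX)"
    by (rule nn_integral_density) (use measurable_emeasure_kernel[OF K1_meas A] in simp_all)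
  also have "\<dots> = (\<integral>\<^sup>+x. ennreal (f \<theta>0 x) * \<integral>\<^sup>+ts. ennreal (Fpost x ts) * kk A x ts \<partial>T \<partial>MX)"
    using A by (intro nn_integral_cong) (simp add: K1_emeasure)
  finally show ?thesis .
qed

lemma Lm_sets: "sets Lm = sets PX"
  unfolding Lm_eq using K1_meas spaceMX
  by (intro sets_bind_measurable) (simp_all only: measurable_cong_sets[OF sets_density refl] space_density not_False_eq_True)

definition KQ :: "'x \<Rightarrow> (nat \<Rightarrow> 't) \<Rightarrow> (nat \<Rightarrow> 'x) measure" where
  "KQ x ts = Q x ts \<bind> (\<lambda>y. return PX (y(0 := x)))"

lemma KQ_meas: "(\<lambda>(x, ts). KQ x ts) \<in> MX \<Otimes>\<^sub>M T \<rightarrow>\<^sub>M subprob_algebra PX"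
proof -
  have p: "(\<lambda>p. (fst (fst p), snd p)) \<in> (MX \<Otimes>\<^sub>M T) \<Otimes>\<^sub>M PY \<rightarrow>\<^sub>M MX \<Otimes>\<^sub>M PY"
    by (intro measurable_Pair measurable_compose[OF measurable_fst measurable_fst] measurable_snd)
  have r: "(\<lambda>p. (\<lambda>(x, y). return PX (y(0 := x))) (fst (fst p), snd p)) \<in> (MX \<Otimes>\<^sub>M T) \<Otimes>\<^sub>M PY \<rightarrow>\<^sub>M subprob_algebra PX"
    by (rule measurable_compose[OF p ret_kernel])
  have e: "(\<lambda>p. (\<lambda>(x, y). return PX (y(0 := x))) (fst (fst p), snd p)) = case_prod (\<lambda>z y. return PX (y(0 := fst z)))"
    by (auto simp: fun_eq_iff)
  have r': "case_prod (\<lambda>z y. return PX (y(0 := fst z))) \<in> (MX \<Otimes>\<^sub>M T) \<Otimes>\<^sub>M PY \<rightarrow>\<^sub>M subprob_algebra PX"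
    using r unfolding e .
  have "(\<lambda>z. (case z of (x, ts) \<Rightarrow> Q x ts) \<bind> (\<lambda>y. return PX (y(0 := fst z)))) \<in> MX \<Otimes>\<^sub>M T \<rightarrow>\<^sub>M subprob_algebra PX"
    by (rule measurable_bind'[OF Q_kernel' r'])
  moreover have "(\<lambda>(x, ts). KQ x ts) = (\<lambda>z. (case z of (x, ts) \<Rightarrow> Q x ts) \<bind> (\<lambda>y. return PX (y(0 := fst z))))"
    by (auto simp: fun_eq_iff KQ_def)
  ultimately show ?thesis by (simp only:)
qed

lemma KQ_prob:
  assumes x: "x \<in> space MX" and ts: "ts \<in> space T"
  shows "prob_space (KQ x ts) \<and> sets (KQ x ts) = sets PX"
proof -
  have sQ: "sets (Q x ts) = sets PY" using Q_prob[OF x ts] by blast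
  have rk: "(\<lambda>y. return PX (y(0 := x))) \<in> Q x ts \<rightarrow>\<^sub>M prob_algebra PX"
  proof (rule measurable_prob_algebraI)
    show "(\<lambda>y. return PX (y(0 := x))) \<in> Q x ts \<rightarrow>\<^sub>M subprob_algebra PX"
      using ret_kernel_x[OF x] by (simp only: measurable_cong_sets[OF sQ refl])
    fix y assume "y \<in> space (Q x ts)"
    then have "y \<in> space PY" using sets_eq_imp_space_eq[OF sQ] by simp
    then show "prob_space (return PX (y(0 := x)))" by (intro prob_space_return upd_space x)
  qed
  have Qs: "Q x ts \<in> space (prob_algebra PY)" using Q_prob[OF x ts] by (simp add: space_prob_algebra)
  have rk': "(\<lambda>y. return PX (y(0 := x))) \<in> PY \<rightarrow>\<^sub>M prob_algebra PX"
    using rk by (simp only: measurable_cong_sets[OF sQ refl])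
  show ?thesis unfolding KQ_def
    using prob_space_bind'[OF Qs rk'] sets_bind'[OF Qs rk'] by blast
qed

end

locale th2p = th2 MX MT f pr B M \<theta>0 Q
  for MX :: "'x measure" and MT :: "'t measure" and f pr B M \<theta>0 Q +
  fixes pi0 :: "'t \<Rightarrow> real"
  assumes pi0_dens: "is_density MT pi0" and pi0_supp: "supp_cover MX MT f pi0"
begin

definition w :: "'t \<Rightarrow> real" where "w \<theta> = pi0 \<theta> / pr \<theta>"
definition h :: "(nat \<Rightarrow> 't) \<Rightarrow> real" where "h ts = (\<Sum>b\<in>{1..B}. w (ts b)) / real B"
definition Pi :: "(nat \<Rightarrow> 't) \<Rightarrow> real" where "Pi ts = (\<Prod>b\<in>{1..B}. pr (ts b))"
abbreviation "G \<equiv> g_const MX MT f pr B"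
abbreviation "gu \<equiv> g_unnorm MT f pr B"
definition nu :: "(nat \<Rightarrow> 't) \<Rightarrow> ennreal" where "nu ts = ennreal (Pi ts * h ts) * G ts"
definition good :: "(nat \<Rightarrow> 't) \<Rightarrow> bool" where "good ts \<longleftrightarrow> 0 < G ts \<and> G ts < \<infinity>"

lemma pi0_meas[measurable]: "pi0 \<in> borel_measurable MT"
  using pi0_dens by (simp add: is_density_def)

lemma w_meas[measurable]: "w \<in> borel_measurable MT"
  unfolding w_def by measurable

lemma w_nonneg: "\<theta> \<in> space MT \<Longrightarrow> 0 \<le> w \<theta>"
  unfolding w_def using rho_nonneg[OF pi0_dens] pi_pos by (simp add: less_imp_le)

lemma h_meas[measurable]: "h \<in> borel_measurable T"
  unfolding h_def by measurable

lemma Pi_meas[measurable]: "Pi \<in> borel_measurable T"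
  unfolding Pi_def by measurable

lemma h_nonneg: "ts \<in> space T \<Longrightarrow> 0 \<le> h ts"
  unfolding h_def by (intro divide_nonneg_nonneg sum_nonneg w_nonneg) (auto simp: space_PiM)

lemma Pi_nonneg: "ts \<in> space T \<Longrightarrow> 0 \<le> Pi ts"
  unfolding Pi_def using pi_pos tsT by (intro prod_nonneg) (auto intro: less_imp_le)

lemma f_meas3:
  "b \<in> {1..B} \<Longrightarrow> (\<lambda>p. f (fst p b) (snd p)) \<in> borel_measurable (T \<Otimes>\<^sub>M MX)"
proof -
  assume b: "b \<in> {1..B}"
  have "(\<lambda>p. (fst p b, snd p)) \<in> T \<Otimes>\<^sub>M MX \<rightarrow>\<^sub>M MT \<Otimes>\<^sub>M MX"
    using b by (intro measurable_Pair measurable_compose[OF measurable_fst measurable_component_singleton] measurable_snd)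
  from measurable_compose[OF this f_meas] show ?thesis by (simp add: case_prod_beta)
qed

lemma gu_meas[measurable]: "(\<lambda>(ts, x). gu ts x) \<in> borel_measurable (T \<Otimes>\<^sub>M MX)"
proof -
  have "(\<lambda>p. (\<Prod>b\<in>{1..B}. f (fst p b) (snd p)) / fbar MT f pr (snd p) ^ (B - 1)) \<in> borel_measurable (T \<Otimes>\<^sub>M MX)"
    using f_meas3 by measurable
  moreover have "(\<lambda>(ts, x). gu ts x) = (\<lambda>p. (\<Prod>b\<in>{1..B}. f (fst p b) (snd p)) / fbar MT f pr (snd p) ^ (B - 1))"
    by (auto simp: fun_eq_iff g_unnorm_def)
  ultimately show ?thesis by (simp only:)
qed

lemma gu_nonneg: "ts \<in> space T \<Longrightarrow> x \<in> space MX \<Longrightarrow> 0 \<le> gu ts x"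
  unfolding g_unnorm_def using f_nonneg fbar_nonneg tsT
  by (intro divide_nonneg_nonneg prod_nonneg zero_le_power) auto

lemma G_meas[measurable]: "G \<in> borel_measurable T"
proof -
  interpret sigma_finite_measure MX by (rule sfX)
  have "(\<lambda>ts. \<integral>\<^sup>+x. ennreal (gu ts x) \<partial>MX) \<in> borel_measurable T"
    using gu_meas by measurable
  then show ?thesis unfolding g_const_def[abs_def] .
qed

lemma sfTB: "sigma_finite_measure T"
  by (rule product_sigma_finite.sigma_finite) (auto simp: product_sigma_finite_def sfT)

lemma Ien_zero_pi0:
  assumes x: "x \<in> space MX" and z: "Ien pr x = 0"
  shows "Ien pi0 x = 0"
proof -
  have "AE \<theta> in MT. ennreal (pr \<theta> * f \<theta> x) = 0"
    using z unfolding Ien_def by (subst nn_integral_0_iff_AE[symmetric]) (use x in measurable)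
  then have "AE \<theta> in MT. ennreal (pi0 \<theta> * f \<theta> x) = 0"
  proof (rule AE_mp, intro AE_I2 impI)
    fix \<theta> assume t: "\<theta> \<in> space MT" and e: "ennreal (pr \<theta> * f \<theta> x) = 0"
    have "pr \<theta> * f \<theta> x \<le> 0" using e by (simp add: ennreal_eq_0_iff)
    then have "f \<theta> x = 0"
      using pi_pos[OF t] f_nonneg[OF t x] by (simp add: mult_le_0_iff)
    then show "ennreal (pi0 \<theta> * f \<theta> x) = 0" by simp
  qed
  moreover have m: "(\<lambda>\<theta>. ennreal (pi0 \<theta> * f \<theta> x)) \<in> borel_measurable MT" using x by measurable
  ultimately show ?thesis unfolding Ien_def using nn_integral_0_iff_AE[OF m] by simp
qed

lemma J_eq:
  assumes x: "x \<in> space MX" and fin: "Ien pr x \<noteq> \<infinity>"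
  shows "(\<integral>\<^sup>+ts. ennreal (Pi ts * h ts * gu ts x) \<partial>T) = Ien pi0 x"
proof -
  define F where "F = fbar MT f pr x"
  define c where "c = 1 / (real B * F ^ (B - 1))"
  have c0: "0 \<le> c" unfolding c_def F_def using fbar_nonneg by simp
  have cardB: "card {1..B} = B" by simp
  have ident: "Pi ts * h ts * gu ts x = c * ((\<Prod>b\<in>{1..B}. pr (ts b) * f (ts b) x) * (\<Sum>b\<in>{1..B}. w (ts b)))" for ts
    by (simp add: Pi_def h_def g_unnorm_def c_def F_def prod.distrib divide_inverse inverse_mult_distrib mult_ac)
  have eq: "ennreal (Pi ts * h ts * gu ts x)
      = ennreal c * ((\<Prod>b\<in>{1..B}. ennreal (pr (ts b) * f (ts b) x)) * (\<Sum>b\<in>{1..B}. ennreal (w (ts b))))"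
    if ts: "ts \<in> space T" for ts
  proof -
    have n1: "\<And>b. b \<in> {1..B} \<Longrightarrow> 0 \<le> pr (ts b) * f (ts b) x"
      using pi_pos f_nonneg[OF _ x] tsT[OF ts] by (simp add: less_imp_le)
    have n2: "\<And>b. b \<in> {1..B} \<Longrightarrow> 0 \<le> w (ts b)" using w_nonneg tsT[OF ts] by simp
    have P0: "0 \<le> (\<Prod>b\<in>{1..B}. pr (ts b) * f (ts b) x)" by (rule prod_nonneg) (rule n1)
    have S0: "0 \<le> (\<Sum>b\<in>{1..B}. w (ts b))" by (rule sum_nonneg) (rule n2)
    have "ennreal (c * ((\<Prod>b\<in>{1..B}. pr (ts b) * f (ts b) x) * (\<Sum>b\<in>{1..B}. w (ts b))))
       = ennreal c * (ennreal (\<Prod>b\<in>{1..B}. pr (ts b) * f (ts b) x) * ennreal (\<Sum>b\<in>{1..B}. w (ts b)))"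
      using c0 P0 S0 by (simp add: ennreal_mult)
    moreover have "ennreal (\<Prod>b\<in>{1..B}. pr (ts b) * f (ts b) x) = (\<Prod>b\<in>{1..B}. ennreal (pr (ts b) * f (ts b) x))"
      by (rule prod_ennreal[symmetric]) (rule n1)
    moreover have "ennreal (\<Sum>b\<in>{1..B}. w (ts b)) = (\<Sum>b\<in>{1..B}. ennreal (w (ts b)))"
      by (rule sum_ennreal[symmetric]) (rule n2)
    ultimately show ?thesis unfolding ident by simp
  qed
  have a_meas: "(\<lambda>\<theta>. ennreal (pr \<theta> * f \<theta> x)) \<in> borel_measurable MT" using x by measurable
  have "(\<integral>\<^sup>+ts. ennreal (Pi ts * h ts * gu ts x) \<partial>T)
      = (\<integral>\<^sup>+ts. ennreal c * ((\<Prod>b\<in>{1..B}. ennreal (pr (ts b) * f (ts b) x)) * (\<Sum>b\<in>{1..B}. ennreal (w (ts b)))) \<partial>T)"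
    by (intro nn_integral_cong eq)
  also have "\<dots> = ennreal c * (\<integral>\<^sup>+ts. (\<Prod>b\<in>{1..B}. ennreal (pr (ts b) * f (ts b) x)) * (\<Sum>b\<in>{1..B}. ennreal (w (ts b))) \<partial>T)"
    by (rule nn_integral_cmult) (use x in measurable)
  also have "(\<integral>\<^sup>+ts. (\<Prod>b\<in>{1..B}. ennreal (pr (ts b) * f (ts b) x)) * (\<Sum>b\<in>{1..B}. ennreal (w (ts b))) \<partial>T)
      = (\<Sum>b\<in>{1..B}. (\<integral>\<^sup>+\<theta>. ennreal (pr \<theta> * f \<theta> x) * ennreal (w \<theta>) \<partial>MT) * (\<integral>\<^sup>+\<theta>. ennreal (pr \<theta> * f \<theta> x) \<partial>MT) ^ (card {1..B} - 1))"
    by (rule sep_integral[OF sfT _ a_meas]) auto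
  also have "(\<integral>\<^sup>+\<theta>. ennreal (pr \<theta> * f \<theta> x) * ennreal (w \<theta>) \<partial>MT) = Ien pi0 x"
    unfolding Ien_def
  proof (intro nn_integral_cong)
    fix \<theta> assume t: "\<theta> \<in> space MT"
    have e: "pr \<theta> * f \<theta> x * w \<theta> = pi0 \<theta> * f \<theta> x"
      using pi_pos[OF t] by (simp add: w_def)
    have "ennreal (pr \<theta> * f \<theta> x) * ennreal (w \<theta>) = ennreal (pr \<theta> * f \<theta> x * w \<theta>)"
      using pi_pos[OF t] f_nonneg[OF t x] w_nonneg[OF t] by (intro ennreal_mult[symmetric]) (auto intro: less_imp_le)
    then show "ennreal (pr \<theta> * f \<theta> x) * ennreal (w \<theta>) = ennreal (pi0 \<theta> * f \<theta> x)"
      by (simp only: e)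
  qed
  also have "(\<integral>\<^sup>+\<theta>. ennreal (pr \<theta> * f \<theta> x) \<partial>MT) = Ien pr x" by (simp add: Ien_def)
  finally have *: "(\<integral>\<^sup>+ts. ennreal (Pi ts * h ts * gu ts x) \<partial>T) = ennreal c * (of_nat B * (Ien pi0 x * Ien pr x ^ (B - 1)))"
    by (simp add: cardB)
  show ?thesis
  proof (cases "0 < F")
    case True
    have IF: "Ien pr x = ennreal F" unfolding F_def by (rule Ien_eq[OF fin])
    have "ennreal c * (of_nat B * (Ien pi0 x * Ien pr x ^ (B - 1))) = ennreal (c * real B * F ^ (B - 1)) * Ien pi0 x"
      unfolding IF using c0 True
      by (simp add: ennreal_mult ennreal_power ennreal_of_nat_eq_real_of_nat mult_ac)
    also have "c * real B * F ^ (B - 1) = 1" using True B unfolding c_def by simp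
    finally show ?thesis using * by simp
  next
    case False
    then have "F = 0" using fbar_nonneg[of pr x] unfolding F_def by simp
    then have "Ien pr x = 0" using Ien_eq[OF fin] unfolding F_def by simp
    then have "Ien pi0 x = 0" by (rule Ien_zero_pi0[OF x])
    then show ?thesis using * by simp
  qed
qed

lemma nu_meas[measurable]: "nu \<in> borel_measurable T"
  unfolding nu_def by measurable

lemma G_alt: "ts \<in> space T \<Longrightarrow> ennreal (Pi ts * h ts) * G ts = (\<integral>\<^sup>+x. ennreal (Pi ts * h ts * gu ts x) \<partial>MX)"
proof -
  assume ts: "ts \<in> space T"
  have gm: "(\<lambda>x. ennreal (gu ts x)) \<in> borel_measurable MX"
    using measurable_Pair2[OF gu_meas ts] by simp
  have "ennreal (Pi ts * h ts) * G ts = (\<integral>\<^sup>+x. ennreal (Pi ts * h ts) * ennreal (gu ts x) \<partial>MX)"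
    unfolding g_const_def by (rule nn_integral_cmult[symmetric, OF gm])
  also have "\<dots> = (\<integral>\<^sup>+x. ennreal (Pi ts * h ts * gu ts x) \<partial>MX)"
    using Pi_nonneg[OF ts] h_nonneg[OF ts] gu_nonneg[OF ts]
    by (intro nn_integral_cong) (simp add: ennreal_mult)
  finally show ?thesis .
qed

lemma nu_int: "(\<integral>\<^sup>+ts. nu ts \<partial>T) = 1"
proof -
  interpret P: pair_sigma_finite T MX
    by (intro pair_sigma_finite.intro sfTB sfX)
  have "(\<integral>\<^sup>+ts. nu ts \<partial>T) = (\<integral>\<^sup>+ts. \<integral>\<^sup>+x. ennreal (Pi ts * h ts * gu ts x) \<partial>MX \<partial>T)"
    unfolding nu_def by (intro nn_integral_cong G_alt)
  also have "\<dots> = (\<integral>\<^sup>+x. \<integral>\<^sup>+ts. ennreal (Pi ts * h ts * gu ts x) \<partial>T \<partial>MX)"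
    by (rule P.Fubini'[symmetric]) (use gu_meas in measurable)
  also have "\<dots> = (\<integral>\<^sup>+x. Ien pi0 x \<partial>MX)"
  proof (intro nn_integral_cong_AE)
    show "AE x in MX. (\<integral>\<^sup>+ts. ennreal (Pi ts * h ts * gu ts x) \<partial>T) = Ien pi0 x"
      using Ien_fin[OF pi_dens]
    proof (rule AE_mp, intro AE_I2 impI)
      fix x assume "x \<in> space MX" "Ien pr x \<noteq> \<infinity>"
      then show "(\<integral>\<^sup>+ts. ennreal (Pi ts * h ts * gu ts x) \<partial>T) = Ien pi0 x" by (rule J_eq)
    qed
  qed
  also have "\<dots> = 1" by (rule Ien_integral[OF pi0_dens])
  finally show ?thesis .
qed

definition x0 :: 'x where "x0 = (SOME x. x \<in> space MX)"
definition c0 :: "nat \<Rightarrow> 'x" where "c0 = (\<lambda>i\<in>{0..M}. x0)"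

lemma x0: "x0 \<in> space MX"
  unfolding x0_def using spaceMX by (auto intro: someI_ex)

lemma c0: "c0 \<in> space PX"
  using x0 by (auto simp: c0_def space_PiM)

definition gd :: "(nat \<Rightarrow> 't) \<Rightarrow> 'x \<Rightarrow> ennreal" where
  "gd ts x = (if good ts then ennreal (g_dens MX MT f pr B ts x) else 0)"

definition Kgood :: "(nat \<Rightarrow> 't) \<Rightarrow> (nat \<Rightarrow> 'x) measure" where
  "Kgood ts = density MX (gd ts) \<bind> (\<lambda>x. KQ x ts)"

definition Kmix :: "(nat \<Rightarrow> 't) \<Rightarrow> (nat \<Rightarrow> 'x) measure" where
  "Kmix ts = (if good ts then Kgood ts else return PX c0)"

definition Em :: "(nat \<Rightarrow> 'x) measure" where
  "Em = density T nu \<bind> Kmix"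

lemma good_meas[measurable]: "Measurable.pred T good"
  unfolding good_def by measurable

lemma gdens_meas[measurable]: "(\<lambda>(ts, x). g_dens MX MT f pr B ts x) \<in> borel_measurable (T \<Otimes>\<^sub>M MX)"
proof -
  have "(\<lambda>p. gu (fst p) (snd p) / enn2real (G (fst p))) \<in> borel_measurable (T \<Otimes>\<^sub>M MX)"
    using gu_meas by measurable
  moreover have "(\<lambda>(ts, x). g_dens MX MT f pr B ts x) = (\<lambda>p. gu (fst p) (snd p) / enn2real (G (fst p)))"
    by (auto simp: fun_eq_iff g_dens_def)
  ultimately show ?thesis by (simp only:)
qed

lemma gd_meas[measurable]: "(\<lambda>(ts, x). gd ts x) \<in> borel_measurable (T \<Otimes>\<^sub>M MX)"
proof -
  have "(\<lambda>p. if good (fst p) then ennreal (g_dens MX MT f pr B (fst p) (snd p)) else 0) \<in> borel_measurable (T \<Otimes>\<^sub>M MX)"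
    using gdens_meas by measurable
  moreover have "(\<lambda>(ts, x). gd ts x) = (\<lambda>p. if good (fst p) then ennreal (g_dens MX MT f pr B (fst p) (snd p)) else 0)"
    by (auto simp: fun_eq_iff gd_def)
  ultimately show ?thesis by (simp only:)
qed

lemma gd_int:
  assumes ts: "ts \<in> space T"
  shows "(\<integral>\<^sup>+x. gd ts x \<partial>MX) = (if good ts then 1 else 0)"
proof (cases "good ts")
  case True
  define r where "r = enn2real (G ts)"
  have Gr: "G ts = ennreal r" and r0: "0 < r"
    using True unfolding good_def r_def by (auto simp: less_top enn2real_positive_iff)
  have gm: "(\<lambda>x. ennreal (gu ts x)) \<in> borel_measurable MX"
    using measurable_Pair2[OF gu_meas ts] by simp
  have "(\<integral>\<^sup>+x. gd ts x \<partial>MX) = (\<integral>\<^sup>+x. ennreal (gu ts x) * ennreal (1 / r) \<partial>MX)"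
    using True r0 gu_nonneg[OF ts]
    by (intro nn_integral_cong) (simp add: gd_def g_dens_def r_def[symmetric] ennreal_mult[symmetric])
  also have "\<dots> = G ts * ennreal (1 / r)"
    unfolding g_const_def by (rule nn_integral_multc[OF gm])
  also have "\<dots> = 1" using r0 by (simp add: Gr ennreal_mult[symmetric])
  finally show ?thesis using True by simp
next
  case False
  then show ?thesis by (simp add: gd_def)
qed

lemma gd_kernel: "(\<lambda>ts. density MX (gd ts)) \<in> T \<rightarrow>\<^sub>M subprob_algebra MX"
  by (rule measurable_density_kernel[OF sfX spaceMX gd_meas]) (simp add: gd_int)

lemma KQ_meas_swap: "(\<lambda>(ts, x). KQ x ts) \<in> T \<Otimes>\<^sub>M MX \<rightarrow>\<^sub>M subprob_algebra PX"
proof -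
  have "(\<lambda>z. (\<lambda>(x, ts). KQ x ts) ((\<lambda>(x, y). (y, x)) z)) \<in> T \<Otimes>\<^sub>M MX \<rightarrow>\<^sub>M subprob_algebra PX"
    by (rule measurable_compose[OF measurable_pair_swap' KQ_meas])
  moreover have "(\<lambda>z. (\<lambda>(x, ts). KQ x ts) ((\<lambda>(x, y). (y, x)) z)) = (\<lambda>(ts, x). KQ x ts)"
    by (auto simp: fun_eq_iff)
  ultimately show ?thesis by (simp only:)
qed

lemma Kgood_meas: "Kgood \<in> T \<rightarrow>\<^sub>M subprob_algebra PX"
proof -
  have "(\<lambda>ts. density MX (gd ts) \<bind> (\<lambda>x. KQ x ts)) \<in> T \<rightarrow>\<^sub>M subprob_algebra PX"
    by (rule measurable_bind'[OF gd_kernel KQ_meas_swap])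
  then show ?thesis unfolding Kgood_def[abs_def] .
qed

lemma ret_c0: "return PX c0 \<in> space (subprob_algebra PX)"
  using c0 by (simp add: space_subprob_algebra subprob_space_return)

lemma Kmix_meas: "Kmix \<in> T \<rightarrow>\<^sub>M subprob_algebra PX"
  unfolding Kmix_def[abs_def]
  by (rule measurable_If[OF Kgood_meas measurable_const[OF ret_c0]]) measurable

lemma KQ_kernel_ts:
  assumes ts: "ts \<in> space T"
  shows "(\<lambda>x. KQ x ts) \<in> MX \<rightarrow>\<^sub>M prob_algebra PX"
proof (rule measurable_prob_algebraI)
  show "(\<lambda>x. KQ x ts) \<in> MX \<rightarrow>\<^sub>M subprob_algebra PX"
    using measurable_Pair1[OF KQ_meas ts] by simp
  show "x \<in> space MX \<Longrightarrow> prob_space (KQ x ts)" for x using KQ_prob[OF _ ts] by blast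
qed

lemma Kgood_prob:
  assumes ts: "ts \<in> space T" and g: "good ts"
  shows "prob_space (Kgood ts) \<and> sets (Kgood ts) = sets PX"
proof -
  have gm: "gd ts \<in> borel_measurable MX"
    using measurable_Pair2[OF gd_meas ts] by simp
  have "emeasure (density MX (gd ts)) (space MX) = (\<integral>\<^sup>+x. gd ts x \<partial>MX)"
    by (subst emeasure_density[OF gm]) (auto intro!: nn_integral_cong)
  then have "prob_space (density MX (gd ts))"
    using gd_int[OF ts] g by (intro prob_spaceI) simp
  then have d: "density MX (gd ts) \<in> space (prob_algebra MX)"
    by (simp add: space_prob_algebra)
  have k: "(\<lambda>x. KQ x ts) \<in> MX \<rightarrow>\<^sub>M prob_algebra PX" by (rule KQ_kernel_ts[OF ts])
  show ?thesis unfolding Kgood_def using prob_space_bind'[OF d k] sets_bind'[OF d k] by blast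
qed

lemma Kmix_prob:
  assumes ts: "ts \<in> space T"
  shows "prob_space (Kmix ts) \<and> sets (Kmix ts) = sets PX"
  using Kgood_prob[OF ts] c0 by (auto simp: Kmix_def prob_space_return)

lemma Kmix_pmeas: "Kmix \<in> T \<rightarrow>\<^sub>M prob_algebra PX"
  using Kmix_prob by (intro measurable_prob_algebraI Kmix_meas) blast

lemma numeas_prob: "density T nu \<in> space (prob_algebra T)"
proof -
  have "emeasure (density T nu) (space T) = (\<integral>\<^sup>+ts. nu ts \<partial>T)"
    by (subst emeasure_density[OF nu_meas]) (auto intro!: nn_integral_cong)
  then have "prob_space (density T nu)" using nu_int by (intro prob_spaceI) simp
  then show ?thesis by (simp add: space_prob_algebra)
qed

lemma Em_prob: "prob_space Em" and Em_sets: "sets Em = sets PX"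
  unfolding Em_def using prob_space_bind'[OF numeas_prob Kmix_pmeas] sets_bind'[OF numeas_prob Kmix_pmeas] by auto

lemma Em_emeasure1:
  assumes A: "A \<in> sets PX"
  shows "emeasure Em A = (\<integral>\<^sup>+ts. nu ts * emeasure (Kmix ts) A \<partial>T)"
proof -
  have "emeasure Em A = (\<integral>\<^sup>+ts. emeasure (Kmix ts) A \<partial>density T nu)"
    unfolding Em_def by (rule emeasure_bind_prob_algebra[OF numeas_prob Kmix_pmeas A])
  also have "\<dots> = (\<integral>\<^sup>+ts. nu ts * emeasure (Kmix ts) A \<partial>T)"
    by (rule nn_integral_density[OF nu_meas measurable_emeasure_kernel[OF Kmix_meas A]])
  finally show ?thesis .
qed

lemma Kgood_emeasure:
  assumes ts: "ts \<in> space T" and g: "good ts" and A: "A \<in> sets PX"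
  shows "emeasure (Kgood ts) A = (\<integral>\<^sup>+x. ennreal (g_dens MX MT f pr B ts x) * kk A x ts \<partial>MX)"
proof -
  have gm: "gd ts \<in> borel_measurable MX"
    using measurable_Pair2[OF gd_meas ts] by simp
  have k: "(\<lambda>x. KQ x ts) \<in> density MX (gd ts) \<rightarrow>\<^sub>M subprob_algebra PX"
    using measurable_prob_algebraD[OF KQ_kernel_ts[OF ts]] by (simp only: measurable_cong_sets[OF sets_density refl])
  have "emeasure (Kgood ts) A = (\<integral>\<^sup>+x. emeasure (KQ x ts) A \<partial>density MX (gd ts))"
    unfolding Kgood_def by (rule emeasure_bind[OF _ k A]) (simp add: spaceMX)
  also have "\<dots> = (\<integral>\<^sup>+x. gd ts x * emeasure (KQ x ts) A \<partial>MX)"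
    by (rule nn_integral_density[OF gm]) (use measurable_emeasure_kernel[OF measurable_prob_algebraD[OF KQ_kernel_ts[OF ts]] A] in simp)
  also have "\<dots> = (\<integral>\<^sup>+x. ennreal (g_dens MX MT f pr B ts x) * kk A x ts \<partial>MX)"
    using g ts A by (intro nn_integral_cong) (simp add: gd_def KQ_def kk_alt)
  finally show ?thesis .
qed

definition q :: "'x \<Rightarrow> (nat \<Rightarrow> 't) \<Rightarrow> real" where
  "q x ts = fbar MT f pr x * Fpost x ts * h ts"

lemma Pi_gu:
  assumes F: "0 < fbar MT f pr x"
  shows "Pi ts * gu ts x = fbar MT f pr x * Fpost x ts"
proof -
  define F where "F = fbar MT f pr x"
  have FB: "F ^ B = F * F ^ (B - 1)" using B by (metis Suc_diff_1 less_le_trans zero_less_one power_Suc)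
  have "Fpost x ts = (\<Prod>b\<in>{1..B}. pr (ts b) * f (ts b) x) / F ^ B"
    by (simp add: Fpost_def post_dens_def F_def prod_dividef)
  then have "F * Fpost x ts = (\<Prod>b\<in>{1..B}. pr (ts b) * f (ts b) x) / F ^ (B - 1)"
    using F unfolding F_def[symmetric] FB by simp
  also have "\<dots> = Pi ts * gu ts x"
    by (simp add: Pi_def g_unnorm_def prod.distrib F_def)
  finally show ?thesis unfolding F_def by simp
qed

lemma Fpost_zero: "fbar MT f pr x = 0 \<Longrightarrow> Fpost x ts = 0"
  using B by (auto simp: Fpost_def post_dens_def intro!: prod_zero bexI[of _ 1])

lemma q_nonneg: "x \<in> space MX \<Longrightarrow> ts \<in> space T \<Longrightarrow> 0 \<le> q x ts"
  unfolding q_def using fbar_nonneg Fpost_nonneg h_nonneg by simp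

lemma q_meas[measurable]: "(\<lambda>(x, ts). q x ts) \<in> borel_measurable (MX \<Otimes>\<^sub>M T)"
proof -
  have "(\<lambda>p. fbar MT f pr (fst p) * Fpost (fst p) (snd p) * h (snd p)) \<in> borel_measurable (MX \<Otimes>\<^sub>M T)"
    using Fpost_meas by measurable
  moreover have "(\<lambda>(x, ts). q x ts) = (\<lambda>p. fbar MT f pr (fst p) * Fpost (fst p) (snd p) * h (snd p))"
    by (auto simp: fun_eq_iff q_def)
  ultimately show ?thesis by (simp only:)
qed

lemma integrand_eq:
  assumes ts: "ts \<in> space T" and fin: "nu ts \<noteq> \<infinity>" and A: "A \<in> sets PX"
  shows "nu ts * emeasure (Kmix ts) A = (\<integral>\<^sup>+x. ennreal (Pi ts * h ts * gu ts x) * kk A x ts \<partial>MX)"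
proof (cases "good ts")
  case True
  define r where "r = enn2real (G ts)"
  have Gr: "G ts = ennreal r" and r0: "0 < r"
    using True unfolding good_def r_def by (auto simp: less_top enn2real_positive_iff)
  have km: "(\<lambda>x. kk A x ts) \<in> borel_measurable MX" by (rule kk_meas_x[OF ts A])
  have gm: "(\<lambda>x. ennreal (g_dens MX MT f pr B ts x)) \<in> borel_measurable MX"
    using measurable_Pair2[OF gdens_meas ts] by simp
  have "nu ts * emeasure (Kmix ts) A = ennreal (Pi ts * h ts) * ennreal r * (\<integral>\<^sup>+x. ennreal (g_dens MX MT f pr B ts x) * kk A x ts \<partial>MX)"
    using True by (simp add: nu_def Kmix_def Kgood_emeasure[OF ts True A] Gr)
  also have "\<dots> = (\<integral>\<^sup>+x. ennreal (Pi ts * h ts) * ennreal r * (ennreal (g_dens MX MT f pr B ts x) * kk A x ts) \<partial>MX)"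
    by (rule nn_integral_cmult[symmetric]) (use km gm in measurable)
  also have "\<dots> = (\<integral>\<^sup>+x. ennreal (Pi ts * h ts * gu ts x) * kk A x ts \<partial>MX)"
  proof (intro nn_integral_cong)
    fix x assume x: "x \<in> space MX"
    have e: "Pi ts * h ts * r * g_dens MX MT f pr B ts x = Pi ts * h ts * gu ts x"
      using r0 by (simp add: g_dens_def r_def[symmetric])
    have n: "0 \<le> Pi ts * h ts" "0 \<le> g_dens MX MT f pr B ts x"
      using Pi_nonneg[OF ts] h_nonneg[OF ts] gu_nonneg[OF ts x] r0 by (auto simp: g_dens_def r_def[symmetric])
    have m1: "ennreal (Pi ts * h ts) * ennreal r = ennreal (Pi ts * h ts * r)"
      using n r0 by (intro ennreal_mult[symmetric]) auto
    have m2: "ennreal (Pi ts * h ts * r) * ennreal (g_dens MX MT f pr B ts x) = ennreal (Pi ts * h ts * r * g_dens MX MT f pr B ts x)"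
      using n r0 by (intro ennreal_mult[symmetric]) auto
    have "ennreal (Pi ts * h ts) * ennreal r * ennreal (g_dens MX MT f pr B ts x) = ennreal (Pi ts * h ts * gu ts x)"
      unfolding m1 m2 e ..
    then show "ennreal (Pi ts * h ts) * ennreal r * (ennreal (g_dens MX MT f pr B ts x) * kk A x ts) = ennreal (Pi ts * h ts * gu ts x) * kk A x ts"
      by (metis (no_types, lifting) mult.assoc)
  qed
  finally show ?thesis .
next
  case False
  show ?thesis
  proof (cases "G ts = 0")
    case True
    have "(\<integral>\<^sup>+x. ennreal (Pi ts * h ts * gu ts x) * kk A x ts \<partial>MX) \<le> (\<integral>\<^sup>+x. ennreal (Pi ts * h ts * gu ts x) \<partial>MX)"
      using kk_le1[OF _ ts] by (intro nn_integral_mono) (simp add: mult_left_le)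
    also have "\<dots> = ennreal (Pi ts * h ts) * G ts" by (rule G_alt[OF ts, symmetric])
    also have "\<dots> = 0" using True by simp
    finally show ?thesis using True by (simp add: nu_def)
  next
    case G0: False
    then have Ginf: "G ts = \<infinity>" using False unfolding good_def by (simp add: less_top[symmetric] not_gr_zero)
    then have "ennreal (Pi ts * h ts) = 0" using fin unfolding nu_def by (auto simp: ennreal_mult_eq_top_iff)
    then have "Pi ts * h ts \<le> 0" by (simp add: ennreal_eq_0_iff)
    then have "Pi ts * h ts = 0" using mult_nonneg_nonneg[OF Pi_nonneg[OF ts] h_nonneg[OF ts]] by linarith
    then have z: "Pi ts * h ts = 0" .
    have "(\<integral>\<^sup>+x. ennreal (Pi ts * h ts * gu ts x) * kk A x ts \<partial>MX) = 0"
      unfolding z by simp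
    moreover have "nu ts = 0" unfolding nu_def z by simp
    ultimately show ?thesis by simp
  qed
qed

lemma Em_emeasure2:
  assumes A: "A \<in> sets PX"
  shows "emeasure Em A = (\<integral>\<^sup>+x. \<integral>\<^sup>+ts. ennreal (Pi ts * h ts * gu ts x) * kk A x ts \<partial>T \<partial>MX)"
proof -
  interpret P: pair_sigma_finite T MX
    by (intro pair_sigma_finite.intro sfTB sfX)
  have nufin: "AE ts in T. nu ts \<noteq> \<infinity>"
    by (rule nn_integral_noteq_infinite[OF nu_meas]) (unfold nu_int, simp)
  have kswap: "(\<lambda>(ts, x). kk A x ts) \<in> borel_measurable (T \<Otimes>\<^sub>M MX)"
  proof -
    have "(\<lambda>z. (\<lambda>(x, ts). kk A x ts) ((\<lambda>(x, y). (y, x)) z)) \<in> borel_measurable (T \<Otimes>\<^sub>M MX)"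
      by (rule measurable_compose[OF measurable_pair_swap' kk_meas[OF A]])
    moreover have "(\<lambda>z. (\<lambda>(x, ts). kk A x ts) ((\<lambda>(x, y). (y, x)) z)) = (\<lambda>(ts, x). kk A x ts)"
      by (auto simp: fun_eq_iff)
    ultimately show ?thesis by (simp only:)
  qed
  have "emeasure Em A = (\<integral>\<^sup>+ts. nu ts * emeasure (Kmix ts) A \<partial>T)" by (rule Em_emeasure1[OF A])
  also have "\<dots> = (\<integral>\<^sup>+ts. \<integral>\<^sup>+x. ennreal (Pi ts * h ts * gu ts x) * kk A x ts \<partial>MX \<partial>T)"
  proof (rule nn_integral_cong_AE)
    show "AE ts in T. nu ts * emeasure (Kmix ts) A = (\<integral>\<^sup>+x. ennreal (Pi ts * h ts * gu ts x) * kk A x ts \<partial>MX)"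
      using nufin
    proof (rule AE_mp, intro AE_I2 impI)
      fix ts assume "ts \<in> space T" "nu ts \<noteq> \<infinity>"
      then show "nu ts * emeasure (Kmix ts) A = (\<integral>\<^sup>+x. ennreal (Pi ts * h ts * gu ts x) * kk A x ts \<partial>MX)"
        by (rule integrand_eq[OF _ _ A])
    qed
  qed
  also have "\<dots> = (\<integral>\<^sup>+x. \<integral>\<^sup>+ts. ennreal (Pi ts * h ts * gu ts x) * kk A x ts \<partial>T \<partial>MX)"
    by (rule P.Fubini'[symmetric]) (use gu_meas kswap in measurable)
  finally show ?thesis .
qed

lemma Em_emeasure:
  assumes A: "A \<in> sets PX"
  shows "emeasure Em A = (\<integral>\<^sup>+x. \<integral>\<^sup>+ts. ennreal (q x ts) * kk A x ts \<partial>T \<partial>MX)"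
  unfolding Em_emeasure2[OF A]
proof (rule nn_integral_cong_AE)
  show "AE x in MX. (\<integral>\<^sup>+ts. ennreal (Pi ts * h ts * gu ts x) * kk A x ts \<partial>T) = (\<integral>\<^sup>+ts. ennreal (q x ts) * kk A x ts \<partial>T)"
    using Ien_fin[OF pi_dens]
  proof (rule AE_mp, intro AE_I2 impI)
    fix x assume x: "x \<in> space MX" and fin: "Ien pr x \<noteq> \<infinity>"
    show "(\<integral>\<^sup>+ts. ennreal (Pi ts * h ts * gu ts x) * kk A x ts \<partial>T) = (\<integral>\<^sup>+ts. ennreal (q x ts) * kk A x ts \<partial>T)"
    proof (cases "0 < fbar MT f pr x")
      case True
      have "Pi ts * h ts * gu ts x = q x ts" for ts
      proof -
        have "Pi ts * h ts * gu ts x = h ts * (Pi ts * gu ts x)" by (simp add: mult_ac)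
        also have "\<dots> = h ts * (fbar MT f pr x * Fpost x ts)" by (simp only: Pi_gu[OF True])
        also have "\<dots> = q x ts" by (simp add: q_def mult_ac)
        finally show ?thesis .
      qed
      then show ?thesis by simp
    next
      case False
      then have F0: "fbar MT f pr x = 0" using fbar_nonneg[of pr x] by simp
      then have "Ien pr x = 0" using Ien_eq[OF fin] by simp
      then have J0: "(\<integral>\<^sup>+ts. ennreal (Pi ts * h ts * gu ts x) \<partial>T) = 0"
        using J_eq[OF x fin] Ien_zero_pi0[OF x] by simp
      have "(\<integral>\<^sup>+ts. ennreal (Pi ts * h ts * gu ts x) * kk A x ts \<partial>T) \<le> (\<integral>\<^sup>+ts. ennreal (Pi ts * h ts * gu ts x) \<partial>T)"
        using kk_le1[OF x] by (intro nn_integral_mono) (simp add: mult_left_le)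
      then have "(\<integral>\<^sup>+ts. ennreal (Pi ts * h ts * gu ts x) * kk A x ts \<partial>T) = 0" using J0 by simp
      moreover have "(\<integral>\<^sup>+ts. ennreal (q x ts) * kk A x ts \<partial>T) = 0"
        using F0 by (simp add: q_def)
      ultimately show ?thesis by simp
    qed
  qed
qed

lemma perm_meas:
  assumes p: "p permutes {0..M}"
  shows "(\<lambda>z. z \<circ> p) \<in> PX \<rightarrow>\<^sub>M PX"
proof -
  have "(\<lambda>z i. z (p i)) \<in> PX \<rightarrow>\<^sub>M PX"
  proof (rule measurable_PiM_single')
    fix i assume i: "i \<in> {0..M}"
    then have "p i \<in> {0..M}" using permutes_in_image[OF p] by simp
    then show "(\<lambda>z. z (p i)) \<in> PX \<rightarrow>\<^sub>M MX" by (rule measurable_component_singleton)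
  next
    show "(\<lambda>z i. z (p i)) \<in> space PX \<rightarrow> {0..M} \<rightarrow>\<^sub>E space MX"
    proof
      fix z assume z: "z \<in> space PX"
      show "(\<lambda>i. z (p i)) \<in> {0..M} \<rightarrow>\<^sub>E space MX"
      proof (rule PiE_I)
        fix i assume "i \<in> {0..M}"
        then have "p i \<in> {0..M}" using permutes_in_image[OF p] by simp
        then show "z (p i) \<in> space MX" using z by (auto simp: space_PiM)
      next
        fix i assume "i \<notin> {0..M}"
        then have "p i = i" using permutes_not_in[OF p] by simp
        then show "z (p i) = undefined" using z \<open>i \<notin> {0..M}\<close> by (auto simp: space_PiM PiE_def extensional_def)
      qed
    qed
  qed
  moreover have e: "(\<lambda>z. z \<circ> p) = (\<lambda>z i. z (p i))" by (auto simp: fun_eq_iff)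
  ultimately show ?thesis unfolding e by blast
qed

lemma Kgood_J:
  assumes g: "good ts"
  shows "Kgood ts = joint_law MX M (density MX (g_dens MX MT f pr B ts)) (\<lambda>x. Q x ts)"
proof -
  have "gd ts = (\<lambda>x. ennreal (g_dens MX MT f pr B ts x))" using g by (auto simp: gd_def fun_eq_iff)
  then show ?thesis unfolding Kgood_def joint_law_def KQ_def by simp
qed

lemma Em_exch: "exchangeable {0..M} Em"
  unfolding exchangeable_def
proof (intro allI impI)
  fix p assume p: "p permutes {0..M}"
  have pm: "(\<lambda>z. z \<circ> p) \<in> PX \<rightarrow>\<^sub>M PX" by (rule perm_meas[OF p])
  have Km: "Kmix \<in> density T nu \<rightarrow>\<^sub>M subprob_algebra PX"
    using Kmix_meas by (simp only: measurable_cong_sets[OF sets_density refl])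
  have sp: "space (density T nu) \<noteq> {}" using spaceT by simp
  have "distr Em Em (\<lambda>z. z \<circ> p) = distr Em PX (\<lambda>z. z \<circ> p)"
    by (rule distr_cong) (simp_all add: Em_sets)
  also have "\<dots> = density T nu \<bind> (\<lambda>ts. distr (Kmix ts) PX (\<lambda>z. z \<circ> p))"
    unfolding Em_def by (rule distr_bind[OF Km sp pm])
  also have "\<dots> = density T nu \<bind> Kmix"
  proof (rule bind_cong[OF refl])
    fix ts assume "ts \<in> space (density T nu)"
    then have ts: "ts \<in> space T" by simp
    show "distr (Kmix ts) PX (\<lambda>z. z \<circ> p) = Kmix ts"
    proof (cases "good ts")
      case True
      define J where "J = joint_law MX M (density MX (g_dens MX MT f pr B ts)) (\<lambda>x. Q x ts)"
      have KJ: "Kmix ts = J" using True by (simp add: Kmix_def Kgood_J J_def)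
      have ex: "distr J J (\<lambda>z. z \<circ> p) = J"
        using Q_exch[OF ts] True p unfolding good_def exchangeable_def J_def by blast
      have sJ: "sets J = sets PX" using Kmix_prob[OF ts] KJ by simp
      have "distr J PX (\<lambda>z. z \<circ> p) = distr J J (\<lambda>z. z \<circ> p)"
        by (rule distr_cong) (simp_all add: sJ)
      then show ?thesis using KJ ex by simp
    next
      case False
      have c0p: "c0 \<circ> p = c0"
      proof
        fix i show "(c0 \<circ> p) i = c0 i"
        proof (cases "i \<in> {0..M}")
          case True
          then have "p i \<in> {0..M}" using permutes_in_image[OF p] by simp
          then show ?thesis using True by (simp add: c0_def)
        next
          case False
          then show ?thesis using permutes_not_in[OF p False] by simp
        qed
      qed
      have "distr (return PX c0) PX (\<lambda>z. z \<circ> p) = return PX (c0 \<circ> p)"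
        by (rule distr_return[OF pm c0])
      also have "\<dots> = return PX c0" unfolding c0p ..
      finally show ?thesis using False by (simp add: Kmix_def)
    qed
  qed
  also have "\<dots> = Em" by (simp add: Em_def)
  finally show "distr Em Em (\<lambda>z. z \<circ> p) = Em" .
qed

lemma core_x:
  assumes x: "x \<in> space MX" and F: "0 < fbar MT f pr x" and F0: "0 < fbar MT f pi0 x"
  shows "(\<integral>\<^sup>+ts. ennreal (Fpost x ts * \<bar>1 - (fbar MT f pr x / fbar MT f pi0 x) * h ts\<bar>) \<partial>T)
     \<le> esqrt (dchi2 MT (post_dens MT f pi0 x) (post x)) * ennreal (1 / sqrt B)"
proof -
  define Fv where "Fv = fbar MT f pr x"
  define F0v where "F0v = fbar MT f pi0 x"
  define sc where "sc = Fv / F0v"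
  have Fv: "0 < Fv" and F0v: "0 < F0v" using F F0 by (simp_all add: Fv_def F0v_def)
  have sc0: "0 < sc" using Fv F0v by (simp add: sc_def)
  define Dp where "Dp = density MT (\<lambda>\<theta>. ennreal (post x \<theta>))"
  have pm: "(\<lambda>\<theta>. post x \<theta>) \<in> borel_measurable MT" using measurable_Pair2[OF post_meas x] by simp
  have pm': "(\<lambda>\<theta>. ennreal (post x \<theta>)) \<in> borel_measurable MT" using pm by measurable
  have Dp_prob: "prob_space Dp"
  proof (rule prob_spaceI)
    have "emeasure Dp (space Dp) = (\<integral>\<^sup>+\<theta>. ennreal (post x \<theta>) \<partial>MT)"
      unfolding Dp_def by (subst emeasure_density[OF pm']) (auto intro!: nn_integral_cong)
    then show "emeasure Dp (space Dp) = 1" using post_integral[OF x] F by simp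
  qed
  interpret Dp: prob_space Dp by (rule Dp_prob)
  define u where "u \<theta> = sc * w \<theta> - 1" for \<theta>
  have um[measurable]: "u \<in> borel_measurable Dp" unfolding u_def Dp_def by simp
  have um'[measurable]: "u \<in> borel_measurable MT" unfolding u_def by simp
  have nnD: "(\<integral>\<^sup>+\<theta>. g \<theta> \<partial>Dp) = (\<integral>\<^sup>+\<theta>. ennreal (post x \<theta>) * g \<theta> \<partial>MT)" if g: "g \<in> borel_measurable MT" for g
    unfolding Dp_def by (rule nn_integral_density[OF pm' g])
    have chi: "dchi2 MT (post_dens MT f pi0 x) (post x) = (\<integral>\<^sup>+\<theta>. ennreal ((u \<theta>)\<^sup>2) \<partial>Dp)"
  proof -
    have ae: "AE \<theta> in MT. post x \<theta> = 0 \<longrightarrow> post_dens MT f pi0 x \<theta> = 0"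
    proof (intro AE_I2 impI)
      fix \<theta> assume t: "\<theta> \<in> space MT" and z: "post x \<theta> = 0"
      then have "f \<theta> x = 0" using pi_pos[OF t] F by (simp add: post_dens_def)
      then show "post_dens MT f pi0 x \<theta> = 0" by (simp add: post_dens_def)
    qed
    have "dchi2 MT (post_dens MT f pi0 x) (post x)
        = (\<integral>\<^sup>+\<theta>. ennreal ((post_dens MT f pi0 x \<theta> / post x \<theta> - 1)\<^sup>2 * post x \<theta>) \<partial>MT)"
      using ae by (simp add: dchi2_def)
    also have "\<dots> = (\<integral>\<^sup>+\<theta>. ennreal (post x \<theta>) * ennreal ((u \<theta>)\<^sup>2) \<partial>MT)"
    proof (intro nn_integral_cong)
      fix \<theta> assume t: "\<theta> \<in> space MT"
      have pn: "0 \<le> post x \<theta>" by (rule post_nonneg[OF t x])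
      show "ennreal ((post_dens MT f pi0 x \<theta> / post x \<theta> - 1)\<^sup>2 * post x \<theta>) = ennreal (post x \<theta>) * ennreal ((u \<theta>)\<^sup>2)"
      proof (cases "post x \<theta> = 0")
        case True then show ?thesis by simp
      next
        case False
        then have fx: "f \<theta> x \<noteq> 0" by (auto simp: post_dens_def)
        have "post_dens MT f pi0 x \<theta> / post x \<theta> = sc * w \<theta>"
          using fx pi_pos[OF t] Fv F0v
          by (simp add: post_dens_def sc_def w_def Fv_def[symmetric] F0v_def[symmetric] field_simps)
        then have e: "(post_dens MT f pi0 x \<theta> / post x \<theta> - 1)\<^sup>2 * post x \<theta> = post x \<theta> * (u \<theta>)\<^sup>2"
          by (simp add: u_def mult.commute)
        show ?thesis unfolding e using pn by (rule ennreal_mult) simp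
      qed
    qed
    also have "\<dots> = (\<integral>\<^sup>+\<theta>. ennreal ((u \<theta>)\<^sup>2) \<partial>Dp)"
      by (rule nnD[symmetric]) measurable
    finally show ?thesis .
  qed
    have PDp: "PiM {1..B} (\<lambda>_. Dp) = Dx x" unfolding Dp_def using Px_eq[OF x] by simp
  have Fpm: "(\<lambda>ts. ennreal (Fpost x ts)) \<in> borel_measurable T"
    using measurable_Pair2[OF Fpost_meas x] by simp
  have hB: "\<bar>1 - sc * h ts\<bar> = \<bar>\<Sum>b\<in>{1..B}. u (ts b)\<bar> / real B" for ts
  proof -
    have "(\<Sum>b\<in>{1..B}. u (ts b)) = sc * (\<Sum>b\<in>{1..B}. w (ts b)) - real B"
      by (simp add: u_def sum_subtractf sum_distrib_left)
    moreover have "sc * h ts = sc * (\<Sum>b\<in>{1..B}. w (ts b)) / real B" by (simp add: h_def)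
    moreover have gen: "\<And>S U. U = sc * S - real B \<Longrightarrow> 1 - sc * S / real B = - U / real B"
    proof -
      fix S U :: real assume "U = sc * S - real B"
      moreover have "real B \<noteq> 0" using B by simp
      ultimately show "1 - sc * S / real B = - U / real B" by (simp add: divide_simps)
    qed
    ultimately have "1 - sc * h ts = - (\<Sum>b\<in>{1..B}. u (ts b)) / real B"
      by metis
    then show ?thesis by simp
  qed
  have "(\<integral>\<^sup>+ts. ennreal (Fpost x ts * \<bar>1 - sc * h ts\<bar>) \<partial>T)
      = (\<integral>\<^sup>+ts. ennreal (Fpost x ts) * ennreal (\<bar>1 - sc * h ts\<bar>) \<partial>T)"
    using Fpost_nonneg[OF _ x] by (intro nn_integral_cong) (simp add: ennreal_mult)
  also have "\<dots> = (\<integral>\<^sup>+ts. ennreal (\<bar>1 - sc * h ts\<bar>) \<partial>Dx x)"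
    by (rule nn_integral_density[symmetric, OF Fpm]) measurable
  also have "\<dots> = (\<integral>\<^sup>+ts. ennreal (1 / real B) * ennreal \<bar>\<Sum>b\<in>{1..B}. u (ts b)\<bar> \<partial>PiM {1..B} (\<lambda>_. Dp))"
    unfolding PDp[symmetric] hB by (intro nn_integral_cong) (simp add: ennreal_mult[symmetric] divide_inverse mult.commute)
  also have "\<dots> = ennreal (1 / real B) * (\<integral>\<^sup>+ts. ennreal \<bar>\<Sum>b\<in>{1..B}. u (ts b)\<bar> \<partial>PiM {1..B} (\<lambda>_. Dp))"
    by (rule nn_integral_cmult) measurable
  finally have lhs: "(\<integral>\<^sup>+ts. ennreal (Fpost x ts * \<bar>1 - sc * h ts\<bar>) \<partial>T)
      = ennreal (1 / real B) * (\<integral>\<^sup>+ts. ennreal \<bar>\<Sum>b\<in>{1..B}. u (ts b)\<bar> \<partial>PiM {1..B} (\<lambda>_. Dp))" .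
  show ?thesis
  proof (cases "integrable Dp (\<lambda>\<theta>. (u \<theta>)\<^sup>2)")
    case True
    define V where "V = (\<integral>\<theta>. (u \<theta>)\<^sup>2 \<partial>Dp)"
    have V0: "0 \<le> V" unfolding V_def by simp
    have chiV: "dchi2 MT (post_dens MT f pi0 x) (post x) = ennreal V"
      unfolding chi V_def by (rule nn_integral_eq_integral[OF True]) simp
        have wint: "(\<integral>\<^sup>+\<theta>. ennreal (w \<theta>) \<partial>Dp) = ennreal (F0v / Fv)"
    proof -
      have "(\<integral>\<^sup>+\<theta>. ennreal (w \<theta>) \<partial>Dp) = (\<integral>\<^sup>+\<theta>. ennreal (post x \<theta>) * ennreal (w \<theta>) \<partial>MT)"
        by (rule nnD) simp
      also have "\<dots> = (\<integral>\<^sup>+\<theta>. ennreal (pi0 \<theta> * f \<theta> x) * ennreal (1 / Fv) \<partial>MT)"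
      proof (intro nn_integral_cong)
        fix \<theta> assume t: "\<theta> \<in> space MT"
        have "post x \<theta> * w \<theta> = pi0 \<theta> * f \<theta> x * (1 / Fv)"
          using pi_pos[OF t] by (simp add: post_dens_def w_def Fv_def)
        then show "ennreal (post x \<theta>) * ennreal (w \<theta>) = ennreal (pi0 \<theta> * f \<theta> x) * ennreal (1 / Fv)"
          using post_nonneg[OF t x] w_nonneg[OF t] Fv rho_nonneg[OF pi0_dens t] f_nonneg[OF t x]
          by (simp add: ennreal_mult[symmetric])
      qed
      also have "\<dots> = Ien pi0 x * ennreal (1 / Fv)"
        unfolding Ien_def by (rule nn_integral_multc) (use x in measurable)
      also have "\<dots> = ennreal (F0v / Fv)"
        using fbar_pos_fin[OF F0] Fv F0v by (simp add: F0v_def[symmetric] ennreal_mult[symmetric])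
      finally show ?thesis .
    qed
    have wD: "w \<in> borel_measurable Dp"
      unfolding Dp_def by (simp only: measurable_cong_sets[OF sets_density refl]) (rule w_meas)
    have wpos: "AE \<theta> in Dp. 0 \<le> w \<theta>"
      by (rule AE_I2) (simp add: Dp_def w_nonneg)
    have wI: "integrable Dp w"
      by (rule integrableI_nonneg[OF wD wpos]) (simp add: wint)
    have wE: "(\<integral>\<theta>. w \<theta> \<partial>Dp) = F0v / Fv"
    proof -
      have "ennreal (\<integral>\<theta>. w \<theta> \<partial>Dp) = (\<integral>\<^sup>+\<theta>. ennreal (w \<theta>) \<partial>Dp)"
        by (rule nn_integral_eq_integral[symmetric, OF wI wpos])
      then have "ennreal (\<integral>\<theta>. w \<theta> \<partial>Dp) = ennreal (F0v / Fv)" using wint by simp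
      moreover have "0 \<le> (\<integral>\<theta>. w \<theta> \<partial>Dp)" by (rule integral_nonneg_AE[OF wpos])
      ultimately show ?thesis using Fv F0v by (simp add: ennreal_inj)
    qed
    have u0: "(\<integral>\<theta>. u \<theta> \<partial>Dp) = 0"
    proof -
      have "(\<integral>\<theta>. u \<theta> \<partial>Dp) = sc * (\<integral>\<theta>. w \<theta> \<partial>Dp) - 1"
        unfolding u_def using wI by (simp add: Dp.prob_space)
      also have "\<dots> = 0" unfolding wE sc_def using Fv F0v by simp
      finally show ?thesis .
    qed
    have "(\<integral>\<^sup>+ts. ennreal \<bar>\<Sum>b\<in>{1..B}. u (ts b)\<bar> \<partial>PiM {1..B} (\<lambda>_. Dp)) \<le> ennreal (sqrt (card {1..B} * V))"
      unfolding V_def by (rule core_var[OF Dp_prob _ um True u0]) simp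
    then have "(\<integral>\<^sup>+ts. ennreal (Fpost x ts * \<bar>1 - sc * h ts\<bar>) \<partial>T) \<le> ennreal (1 / real B) * ennreal (sqrt (real B * V))"
      unfolding lhs by (intro mult_left_mono) auto
    also have "\<dots> = ennreal (sqrt V) * ennreal (1 / sqrt B)"
    proof -
      have "1 / real B * sqrt (real B * V) = sqrt V * (1 / sqrt B)"
        using B by (simp add: real_sqrt_mult field_simps)
      then show ?thesis using V0 by (simp add: ennreal_mult[symmetric])
    qed
    also have "\<dots> = esqrt (dchi2 MT (post_dens MT f pi0 x) (post x)) * ennreal (1 / sqrt B)"
      using chiV V0 by (simp add: esqrt_def)
    finally show ?thesis unfolding sc_def Fv_def F0v_def .
  next
    case False
    have "(\<integral>\<^sup>+\<theta>. ennreal ((u \<theta>)\<^sup>2) \<partial>Dp) = \<infinity>"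
    proof (rule ccontr)
      assume "(\<integral>\<^sup>+\<theta>. ennreal ((u \<theta>)\<^sup>2) \<partial>Dp) \<noteq> \<infinity>"
      then have "integrable Dp (\<lambda>\<theta>. (u \<theta>)\<^sup>2)"
        by (intro integrableI_nonneg) (auto simp: less_top)
      with False show False by simp
    qed
    then have "esqrt (dchi2 MT (post_dens MT f pi0 x) (post x)) * ennreal (1 / sqrt B) = \<infinity>"
      using B by (simp add: chi esqrt_def ennreal_mult_eq_top_iff)
    then show ?thesis by simp
  qed
qed

definition p :: "'x \<Rightarrow> (nat \<Rightarrow> 't) \<Rightarrow> real" where
  "p x ts = f \<theta>0 x * Fpost x ts"

lemma p_meas[measurable]: "(\<lambda>(x, ts). p x ts) \<in> borel_measurable (MX \<Otimes>\<^sub>M T)"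
proof -
  have "(\<lambda>z. f \<theta>0 (fst z) * Fpost (fst z) (snd z)) \<in> borel_measurable (MX \<Otimes>\<^sub>M T)"
    using Fpost_meas by measurable
  moreover have "(\<lambda>(x, ts). p x ts) = (\<lambda>z. f \<theta>0 (fst z) * Fpost (fst z) (snd z))"
    by (auto simp: fun_eq_iff p_def)
  ultimately show ?thesis by (simp only:)
qed

lemma fth0_nonneg: "x \<in> space MX \<Longrightarrow> 0 \<le> f \<theta>0 x"
  using f_nonneg[OF \<theta>0] .

lemma p_nonneg: "x \<in> space MX \<Longrightarrow> ts \<in> space T \<Longrightarrow> 0 \<le> p x ts"
  unfolding p_def using fth0_nonneg Fpost_nonneg by simp

lemma q_alt:
  assumes F: "0 < fbar MT f pr x"
  shows "Pi ts * h ts * gu ts x = q x ts"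
proof -
  have "Pi ts * h ts * gu ts x = h ts * (Pi ts * gu ts x)" by (simp add: mult_ac)
  also have "\<dots> = h ts * (fbar MT f pr x * Fpost x ts)" by (simp only: Pi_gu[OF F])
  also have "\<dots> = q x ts" by (simp add: q_def mult_ac)
  finally show ?thesis .
qed

lemma q_int:
  assumes x: "x \<in> space MX" and F: "0 < fbar MT f pr x"
  shows "(\<integral>\<^sup>+ts. ennreal (q x ts) \<partial>T) = Ien pi0 x"
proof -
  have fin: "Ien pr x \<noteq> \<infinity>" using fbar_pos_fin[OF F] by simp
  show ?thesis using J_eq[OF x fin] q_alt[OF F] by simp
qed

lemma q_zero: "fbar MT f pr x = 0 \<Longrightarrow> q x ts = 0"
  by (simp add: q_def Fpost_zero)

lemma p_zero: "fbar MT f pr x = 0 \<Longrightarrow> p x ts = 0"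
  by (simp add: p_def Fpost_zero)

lemma perx:
  assumes x: "x \<in> space MX" and fin0: "Ien pi0 x \<noteq> \<infinity>"
  shows "(\<integral>\<^sup>+ts. ennreal \<bar>p x ts - q x ts\<bar> \<partial>T)
     \<le> ennreal \<bar>f \<theta>0 x - fbar MT f pi0 x\<bar> + ennreal (f \<theta>0 x) * (esqrt (dchi2 MT (post_dens MT f pi0 x) (post x)) * ennreal (1 / sqrt B))"
    (is "?L \<le> ?R")
proof (cases "0 < fbar MT f pr x")
  case False
  then have "fbar MT f pr x = 0" using fbar_nonneg[of pr x] by simp
  then have "?L = 0" by (simp add: p_zero q_zero)
  then show ?thesis by simp
next
  case F: True
  define Fv where "Fv = fbar MT f pr x"
  define F0v where "F0v = fbar MT f pi0 x"
  define a where "a = f \<theta>0 x"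
  have a0: "0 \<le> a" unfolding a_def by (rule fth0_nonneg[OF x])
  have Fv: "0 < Fv" using F by (simp add: Fv_def)
  have Fpm: "(\<lambda>ts. Fpost x ts) \<in> borel_measurable T" using measurable_Pair2[OF Fpost_meas x] by simp
  have qm: "(\<lambda>ts. q x ts) \<in> borel_measurable T" using measurable_Pair2[OF q_meas x] by simp
  have pm: "(\<lambda>ts. p x ts) \<in> borel_measurable T" using measurable_Pair2[OF p_meas x] by simp
  have Fint: "(\<integral>\<^sup>+ts. ennreal (Fpost x ts) \<partial>T) = 1" using Fpost_integral[OF x] F by simp
  show ?thesis
  proof (cases "0 < F0v")
    case False
    then have F00: "F0v = 0" using fbar_nonneg[of pi0 x] by (simp add: F0v_def)
    have qint: "(\<integral>\<^sup>+ts. ennreal (q x ts) \<partial>T) = 0"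
    proof -
      have "(\<integral>\<^sup>+ts. ennreal (q x ts) \<partial>T) = Ien pi0 x" by (rule q_int[OF x F])
      also have "Ien pi0 x = 0" using Ien_eq[OF fin0] F00 by (simp add: F0v_def)
      finally show ?thesis .
    qed
    have "?L \<le> (\<integral>\<^sup>+ts. ennreal (p x ts) + ennreal (q x ts) \<partial>T)"
    proof (intro nn_integral_mono)
      fix ts assume ts: "ts \<in> space T"
      have "\<bar>p x ts - q x ts\<bar> \<le> p x ts + q x ts" using p_nonneg[OF x ts] q_nonneg[OF x ts] by simp
      then show "ennreal \<bar>p x ts - q x ts\<bar> \<le> ennreal (p x ts) + ennreal (q x ts)"
        using p_nonneg[OF x ts] q_nonneg[OF x ts] by (simp add: ennreal_plus[symmetric] del: ennreal_plus)
    qed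
    also have "\<dots> = (\<integral>\<^sup>+ts. ennreal (p x ts) \<partial>T) + (\<integral>\<^sup>+ts. ennreal (q x ts) \<partial>T)"
      by (rule nn_integral_add) (use pm qm in measurable)
    also have "(\<integral>\<^sup>+ts. ennreal (p x ts) \<partial>T) = ennreal a * (\<integral>\<^sup>+ts. ennreal (Fpost x ts) \<partial>T)"
    proof -
      have "(\<integral>\<^sup>+ts. ennreal (p x ts) \<partial>T) = (\<integral>\<^sup>+ts. ennreal a * ennreal (Fpost x ts) \<partial>T)"
        using a0 by (intro nn_integral_cong) (simp add: p_def a_def ennreal_mult')
      also have "\<dots> = ennreal a * (\<integral>\<^sup>+ts. ennreal (Fpost x ts) \<partial>T)"
        by (rule nn_integral_cmult) (use Fpm in measurable)
      finally show ?thesis .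
    qed
    finally have "?L \<le> ennreal a" using Fint qint by simp
    also have "ennreal a \<le> ennreal \<bar>f \<theta>0 x - fbar MT f pi0 x\<bar>"
      using a0 F00 by (simp add: a_def F0v_def)
    finally show ?thesis by (rule order_trans) simp
  next
    case F0: True
    define sc where "sc = Fv / F0v"
    have sc0: "0 < sc" using Fv F0 by (simp add: sc_def)
    define c where "c = \<bar>a - F0v\<bar>"
    have pw: "ennreal \<bar>p x ts - q x ts\<bar> \<le> ennreal a * ennreal (Fpost x ts * \<bar>1 - sc * h ts\<bar>) + ennreal (q x ts) * ennreal (sc * c / Fv)"
      if ts: "ts \<in> space T" for ts
    proof -
      have Fp: "0 \<le> Fpost x ts" by (rule Fpost_nonneg[OF ts x])
      have h0: "0 \<le> h ts" by (rule h_nonneg[OF ts])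
      have id: "p x ts - q x ts = Fpost x ts * (a * (1 - sc * h ts) + sc * h ts * (a - F0v))"
        using F0 by (simp add: p_def q_def a_def sc_def Fv_def[symmetric] field_simps)
      have "\<bar>p x ts - q x ts\<bar> \<le> Fpost x ts * (a * \<bar>1 - sc * h ts\<bar> + sc * h ts * c)"
      proof -
        have "\<bar>a * (1 - sc * h ts) + sc * h ts * (a - F0v)\<bar> \<le> \<bar>a * (1 - sc * h ts)\<bar> + \<bar>sc * h ts * (a - F0v)\<bar>"
          by (rule abs_triangle_ineq)
        also have "\<dots> = a * \<bar>1 - sc * h ts\<bar> + sc * h ts * c"
          using a0 sc0 h0 by (simp add: abs_mult c_def)
        finally show ?thesis unfolding id abs_mult using Fp by (simp add: mult_left_mono)
      qed
      also have "\<dots> = a * (Fpost x ts * \<bar>1 - sc * h ts\<bar>) + q x ts * (sc * c / Fv)"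
        using Fv by (simp add: q_def Fv_def[symmetric] field_simps)
      finally have le: "\<bar>p x ts - q x ts\<bar> \<le> a * (Fpost x ts * \<bar>1 - sc * h ts\<bar>) + q x ts * (sc * c / Fv)" .
      have n1: "0 \<le> a * (Fpost x ts * \<bar>1 - sc * h ts\<bar>)" using a0 Fp by simp
      have n2: "0 \<le> q x ts * (sc * c / Fv)" using q_nonneg[OF x ts] sc0 Fv by (simp add: c_def)
      have "ennreal \<bar>p x ts - q x ts\<bar> \<le> ennreal (a * (Fpost x ts * \<bar>1 - sc * h ts\<bar>) + q x ts * (sc * c / Fv))"
        using le by (rule ennreal_leI)
      also have "\<dots> = ennreal a * ennreal (Fpost x ts * \<bar>1 - sc * h ts\<bar>) + ennreal (q x ts) * ennreal (sc * c / Fv)"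
        using n1 n2 a0 Fp q_nonneg[OF x ts] sc0 Fv by (simp add: ennreal_plus[symmetric] ennreal_mult[symmetric] c_def del: ennreal_plus)
      finally show ?thesis .
    qed
    have "?L \<le> (\<integral>\<^sup>+ts. ennreal a * ennreal (Fpost x ts * \<bar>1 - sc * h ts\<bar>) + ennreal (q x ts) * ennreal (sc * c / Fv) \<partial>T)"
      by (intro nn_integral_mono pw)
    also have "\<dots> = ennreal a * (\<integral>\<^sup>+ts. ennreal (Fpost x ts * \<bar>1 - sc * h ts\<bar>) \<partial>T) + (\<integral>\<^sup>+ts. ennreal (q x ts) \<partial>T) * ennreal (sc * c / Fv)"
    proof -
      have m0: "(\<lambda>ts. ennreal (Fpost x ts * \<bar>1 - sc * h ts\<bar>)) \<in> borel_measurable T" using Fpm by measurable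
      have m0': "(\<lambda>ts. ennreal (q x ts)) \<in> borel_measurable T" using qm by measurable
      have m1: "(\<lambda>ts. ennreal a * ennreal (Fpost x ts * \<bar>1 - sc * h ts\<bar>)) \<in> borel_measurable T" using m0 by measurable
      have m2: "(\<lambda>ts. ennreal (q x ts) * ennreal (sc * c / Fv)) \<in> borel_measurable T" using m0' by measurable
      show ?thesis
        by (simp only: nn_integral_add[OF m1 m2] nn_integral_cmult[OF m0] nn_integral_multc[OF m0'])
    qed
    also have "(\<integral>\<^sup>+ts. ennreal (q x ts) \<partial>T) * ennreal (sc * c / Fv) = ennreal c"
    proof -
      have "(\<integral>\<^sup>+ts. ennreal (q x ts) \<partial>T) = ennreal F0v"
        using q_int[OF x F] fbar_pos_fin[OF F0[unfolded F0v_def]] by (simp add: F0v_def)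
      moreover have "F0v * (sc * c / Fv) = c" using Fv F0 by (simp add: sc_def)
      ultimately show ?thesis using F0 sc0 Fv by (simp add: ennreal_mult[symmetric] c_def)
    qed
    also have "ennreal a * (\<integral>\<^sup>+ts. ennreal (Fpost x ts * \<bar>1 - sc * h ts\<bar>) \<partial>T)
        \<le> ennreal a * (esqrt (dchi2 MT (post_dens MT f pi0 x) (post x)) * ennreal (1 / sqrt B))"
      by (intro mult_left_mono) (use core_x[OF x F F0[unfolded F0v_def]] in \<open>simp_all add: sc_def Fv_def F0v_def\<close>)
    finally show ?thesis by (simp add: a_def c_def F0v_def add.commute)
  qed
qed

lemma esqrt_meas[measurable]: "esqrt \<in> borel_measurable borel"
  unfolding esqrt_def[abs_def] by measurable

definition chiM :: "'x \<Rightarrow> ennreal" where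
  "chiM x = (if 0 < fbar MT f pr x
     then esqrt (\<integral>\<^sup>+\<theta>. ennreal ((post_dens MT f pi0 x \<theta> / post x \<theta> - 1)\<^sup>2 * post x \<theta>) \<partial>MT) else 0)"

lemma post0_meas[measurable]: "(\<lambda>(x, \<theta>). post_dens MT f pi0 x \<theta>) \<in> borel_measurable (MX \<Otimes>\<^sub>M MT)"
  unfolding post_dens_def by measurable

lemma chiM_meas[measurable]: "chiM \<in> borel_measurable MX"
proof -
  interpret sigma_finite_measure MT by (rule sfT)
  have "(\<lambda>x. \<integral>\<^sup>+\<theta>. ennreal ((post_dens MT f pi0 x \<theta> / post x \<theta> - 1)\<^sup>2 * post x \<theta>) \<partial>MT) \<in> borel_measurable MX"
    using post0_meas post_meas by measurable
  then show ?thesis unfolding chiM_def[abs_def] by measurable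
qed

lemma chiM_eq:
  assumes x: "x \<in> space MX" and F: "0 < fbar MT f pr x"
  shows "chiM x = esqrt (dchi2 MT (post_dens MT f pi0 x) (post x))"
proof -
  have ae: "AE \<theta> in MT. post x \<theta> = 0 \<longrightarrow> post_dens MT f pi0 x \<theta> = 0"
  proof (intro AE_I2 impI)
    fix \<theta> assume t: "\<theta> \<in> space MT" and z: "post x \<theta> = 0"
    then have "f \<theta> x = 0" using pi_pos[OF t] F by (simp add: post_dens_def)
    then show "post_dens MT f pi0 x \<theta> = 0" by (simp add: post_dens_def)
  qed
  show ?thesis using ae F by (simp add: chiM_def dchi2_def)
qed

lemma chiM_le:
  assumes x: "x \<in> space MX"
  shows "chiM x \<le> esqrt (dchi2 MT (post_dens MT f pi0 x) (post x))"
  using chiM_eq[OF x] by (cases "0 < fbar MT f pr x") (auto simp: chiM_def)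

lemma perx':
  assumes x: "x \<in> space MX" and fin0: "Ien pi0 x \<noteq> \<infinity>"
  shows "(\<integral>\<^sup>+ts. ennreal \<bar>p x ts - q x ts\<bar> \<partial>T)
     \<le> ennreal \<bar>f \<theta>0 x - fbar MT f pi0 x\<bar> + ennreal (f \<theta>0 x) * (chiM x * ennreal (1 / sqrt B))"
proof (cases "0 < fbar MT f pr x")
  case True
  then show ?thesis using perx[OF x fin0] chiM_eq[OF x True] by simp
next
  case False
  then have "fbar MT f pr x = 0" using fbar_nonneg[of pr x] by simp
  then have "(\<integral>\<^sup>+ts. ennreal \<bar>p x ts - q x ts\<bar> \<partial>T) = 0" by (simp add: p_zero q_zero)
  then show ?thesis by simp
qed

lemma inner_meas:
  assumes g: "(\<lambda>(x, ts). g x ts) \<in> borel_measurable (MX \<Otimes>\<^sub>M T)"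
  shows "(\<lambda>x. \<integral>\<^sup>+ts. g x ts \<partial>T) \<in> borel_measurable MX"
proof -
  interpret sigma_finite_measure T by (rule sfTB)
  show ?thesis using g by measurable
qed

lemma iint_add:
  assumes a: "(\<lambda>(x, ts). a x ts) \<in> borel_measurable (MX \<Otimes>\<^sub>M T)"
    and b: "(\<lambda>(x, ts). b x ts) \<in> borel_measurable (MX \<Otimes>\<^sub>M T)"
  shows "(\<integral>\<^sup>+x. \<integral>\<^sup>+ts. a x ts + b x ts \<partial>T \<partial>MX) = (\<integral>\<^sup>+x. \<integral>\<^sup>+ts. a x ts \<partial>T \<partial>MX) + (\<integral>\<^sup>+x. \<integral>\<^sup>+ts. b x ts \<partial>T \<partial>MX)"
proof -
  have "(\<integral>\<^sup>+x. \<integral>\<^sup>+ts. a x ts + b x ts \<partial>T \<partial>MX) = (\<integral>\<^sup>+x. (\<integral>\<^sup>+ts. a x ts \<partial>T) + (\<integral>\<^sup>+ts. b x ts \<partial>T) \<partial>MX)"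
  proof (intro nn_integral_cong nn_integral_add)
    fix x assume x: "x \<in> space MX"
    show "(\<lambda>ts. a x ts) \<in> borel_measurable T" using measurable_Pair2[OF a x] by simp
    show "(\<lambda>ts. b x ts) \<in> borel_measurable T" using measurable_Pair2[OF b x] by simp
  qed
  also have "\<dots> = (\<integral>\<^sup>+x. \<integral>\<^sup>+ts. a x ts \<partial>T \<partial>MX) + (\<integral>\<^sup>+x. \<integral>\<^sup>+ts. b x ts \<partial>T \<partial>MX)"
    by (rule nn_integral_add[OF inner_meas[OF a] inner_meas[OF b]])
  finally show ?thesis .
qed

lemma iint_mono:
  assumes "\<And>x ts. x \<in> space MX \<Longrightarrow> ts \<in> space T \<Longrightarrow> a x ts \<le> b x ts"
  shows "(\<integral>\<^sup>+x. \<integral>\<^sup>+ts. a x ts \<partial>T \<partial>MX) \<le> (\<integral>\<^sup>+x. \<integral>\<^sup>+ts. b x ts \<partial>T \<partial>MX)"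
  using assms by (intro nn_integral_mono) auto

lemma Lm_emeasure':
  assumes A: "A \<in> sets PX"
  shows "emeasure Lm A = (\<integral>\<^sup>+x. \<integral>\<^sup>+ts. ennreal (p x ts) * kk A x ts \<partial>T \<partial>MX)"
  unfolding Lm_emeasure[OF A]
proof (intro nn_integral_cong)
  fix x assume x: "x \<in> space MX"
  have fm: "(\<lambda>ts. Fpost x ts) \<in> borel_measurable T" using measurable_Pair2[OF Fpost_meas x] by simp
  have fm': "(\<lambda>ts. ennreal (Fpost x ts)) \<in> borel_measurable T" using measurable_compose[OF fm measurable_ennreal] by simp
  have m: "(\<lambda>ts. ennreal (Fpost x ts) * kk A x ts) \<in> borel_measurable T"
    by (rule borel_measurable_times_ennreal[OF fm' kk_meas_ts[OF x A]])
  have "ennreal (f \<theta>0 x) * (\<integral>\<^sup>+ts. ennreal (Fpost x ts) * kk A x ts \<partial>T) = (\<integral>\<^sup>+ts. ennreal (f \<theta>0 x) * (ennreal (Fpost x ts) * kk A x ts) \<partial>T)"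
    by (rule nn_integral_cmult[symmetric, OF m])
  also have "\<dots> = (\<integral>\<^sup>+ts. ennreal (p x ts) * kk A x ts \<partial>T)"
    using fth0_nonneg[OF x] by (intro nn_integral_cong) (simp add: p_def ennreal_mult' mult.assoc)
  finally show "ennreal (f \<theta>0 x) * (\<integral>\<^sup>+ts. ennreal (Fpost x ts) * kk A x ts \<partial>T) = (\<integral>\<^sup>+ts. ennreal (p x ts) * kk A x ts \<partial>T)" .
qed

lemma p_total: "(\<integral>\<^sup>+x. \<integral>\<^sup>+ts. ennreal (p x ts) \<partial>T \<partial>MX) = 1"
proof -
  have supp: "AE x in MX. 0 < f \<theta>0 x \<longrightarrow> 0 < fbar MT f pr x"
    using pi_supp \<theta>0 by (simp add: supp_cover_def)
  have "(\<integral>\<^sup>+x. \<integral>\<^sup>+ts. ennreal (p x ts) \<partial>T \<partial>MX) = (\<integral>\<^sup>+x. ennreal (f \<theta>0 x) \<partial>MX)"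
  proof (rule nn_integral_cong_AE)
    show "AE x in MX. (\<integral>\<^sup>+ts. ennreal (p x ts) \<partial>T) = ennreal (f \<theta>0 x)"
      using supp
    proof (rule AE_mp, intro AE_I2 impI)
      fix x assume x: "x \<in> space MX" and i: "0 < f \<theta>0 x \<longrightarrow> 0 < fbar MT f pr x"
      have "(\<integral>\<^sup>+ts. ennreal (p x ts) \<partial>T) = (\<integral>\<^sup>+ts. ennreal (f \<theta>0 x) * ennreal (Fpost x ts) \<partial>T)"
        using fth0_nonneg[OF x] by (intro nn_integral_cong) (simp add: p_def ennreal_mult')
      also have "\<dots> = ennreal (f \<theta>0 x) * (\<integral>\<^sup>+ts. ennreal (Fpost x ts) \<partial>T)"
      proof (rule nn_integral_cmult)
        have fm: "(\<lambda>ts. Fpost x ts) \<in> borel_measurable T" using measurable_Pair2[OF Fpost_meas x] by simp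
        show "(\<lambda>ts. ennreal (Fpost x ts)) \<in> borel_measurable T" using measurable_compose[OF fm measurable_ennreal] by simp
      qed
      also have "\<dots> = ennreal (f \<theta>0 x)"
        using Fpost_integral[OF x] i fth0_nonneg[OF x] by (cases "0 < f \<theta>0 x") auto
      finally show "(\<integral>\<^sup>+ts. ennreal (p x ts) \<partial>T) = ennreal (f \<theta>0 x)" .
    qed
  qed
  also have "\<dots> = 1" by (rule f_dens[OF \<theta>0])
  finally show ?thesis .
qed

lemma q_total: "(\<integral>\<^sup>+x. \<integral>\<^sup>+ts. ennreal (q x ts) \<partial>T \<partial>MX) = 1"
proof -
  interpret Em: prob_space Em by (rule Em_prob)
  have sp: "space PX \<in> sets PX" by simp
  have "1 = emeasure Em (space PX)"
    using Em.emeasure_space_1 sets_eq_imp_space_eq[OF Em_sets] by simp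
  also have "\<dots> = (\<integral>\<^sup>+x. \<integral>\<^sup>+ts. ennreal (q x ts) * kk (space PX) x ts \<partial>T \<partial>MX)"
    by (rule Em_emeasure[OF sp])
  also have "\<dots> = (\<integral>\<^sup>+x. \<integral>\<^sup>+ts. ennreal (q x ts) \<partial>T \<partial>MX)"
    by (intro nn_integral_cong) (simp add: kk_space)
  finally show ?thesis by simp
qed

definition "Dplus = (\<integral>\<^sup>+x. \<integral>\<^sup>+ts. ennreal (p x ts - q x ts) \<partial>T \<partial>MX)"
definition "Dminus = (\<integral>\<^sup>+x. \<integral>\<^sup>+ts. ennreal (q x ts - p x ts) \<partial>T \<partial>MX)"

lemma pq_meas[measurable]:
  "(\<lambda>(x, ts). ennreal (p x ts)) \<in> borel_measurable (MX \<Otimes>\<^sub>M T)"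
  "(\<lambda>(x, ts). ennreal (q x ts)) \<in> borel_measurable (MX \<Otimes>\<^sub>M T)"
  "(\<lambda>(x, ts). ennreal (p x ts - q x ts)) \<in> borel_measurable (MX \<Otimes>\<^sub>M T)"
  "(\<lambda>(x, ts). ennreal (q x ts - p x ts)) \<in> borel_measurable (MX \<Otimes>\<^sub>M T)"
proof -
  have pm: "(\<lambda>z. p (fst z) (snd z)) \<in> borel_measurable (MX \<Otimes>\<^sub>M T)" using p_meas by (simp add: case_prod_beta')
  have qm: "(\<lambda>z. q (fst z) (snd z)) \<in> borel_measurable (MX \<Otimes>\<^sub>M T)" using q_meas by (simp add: case_prod_beta')
  show "(\<lambda>(x, ts). ennreal (p x ts)) \<in> borel_measurable (MX \<Otimes>\<^sub>M T)"
    using pm by (simp add: case_prod_beta')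
  show "(\<lambda>(x, ts). ennreal (q x ts)) \<in> borel_measurable (MX \<Otimes>\<^sub>M T)"
    using qm by (simp add: case_prod_beta')
  show "(\<lambda>(x, ts). ennreal (p x ts - q x ts)) \<in> borel_measurable (MX \<Otimes>\<^sub>M T)"
    using pm qm by (simp add: case_prod_beta')
  show "(\<lambda>(x, ts). ennreal (q x ts - p x ts)) \<in> borel_measurable (MX \<Otimes>\<^sub>M T)"
    using pm qm by (simp add: case_prod_beta')
qed

lemma pk_meas:
  assumes A: "A \<in> sets PX"
  shows "(\<lambda>(x, ts). ennreal (q x ts) * kk A x ts) \<in> borel_measurable (MX \<Otimes>\<^sub>M T)"
proof -
  have qm: "(\<lambda>z. q (fst z) (snd z)) \<in> borel_measurable (MX \<Otimes>\<^sub>M T)" using q_meas by (simp add: case_prod_beta')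
  have km: "(\<lambda>z. kk A (fst z) (snd z)) \<in> borel_measurable (MX \<Otimes>\<^sub>M T)" using kk_meas[OF A] by (simp add: case_prod_beta')
  show ?thesis using qm km by (simp add: case_prod_beta')
qed

lemma pk_meas2:
  assumes A: "A \<in> sets PX"
  shows "(\<lambda>(x, ts). ennreal (p x ts) * kk A x ts) \<in> borel_measurable (MX \<Otimes>\<^sub>M T)"
proof -
  have pm: "(\<lambda>z. p (fst z) (snd z)) \<in> borel_measurable (MX \<Otimes>\<^sub>M T)" using p_meas by (simp add: case_prod_beta')
  have km: "(\<lambda>z. kk A (fst z) (snd z)) \<in> borel_measurable (MX \<Otimes>\<^sub>M T)" using kk_meas[OF A] by (simp add: case_prod_beta')
  show ?thesis using pm km by (simp add: case_prod_beta')
qed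

lemma pw_le:
  fixes a b :: real and k :: ennreal
  assumes "0 \<le> a" "0 \<le> b" "k \<le> 1"
  shows "ennreal a * k \<le> ennreal b * k + ennreal (a - b)"
proof (cases "a \<le> b")
  case True
  then have "ennreal a * k \<le> ennreal b * k" by (intro mult_right_mono ennreal_leI) auto
  then show ?thesis by (simp add: add_increasing2)
next
  case False
  then have "ennreal a = ennreal b + ennreal (a - b)" using assms by (simp add: ennreal_plus[symmetric] del: ennreal_plus)
  then have "ennreal a * k = ennreal b * k + ennreal (a - b) * k" by (simp add: distrib_right)
  also have "ennreal (a - b) * k \<le> ennreal (a - b)" using assms(3) by (simp add: mult_left_le)
  finally show ?thesis by simp
qed

lemma L_le:
  assumes A: "A \<in> sets PX"
  shows "emeasure Lm A \<le> emeasure Em A + Dplus"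
proof -
  have "emeasure Lm A \<le> (\<integral>\<^sup>+x. \<integral>\<^sup>+ts. ennreal (q x ts) * kk A x ts + ennreal (p x ts - q x ts) \<partial>T \<partial>MX)"
    unfolding Lm_emeasure'[OF A]
    by (rule iint_mono) (intro pw_le p_nonneg q_nonneg kk_le1; assumption)
  also have "\<dots> = emeasure Em A + Dplus"
    unfolding Em_emeasure[OF A] Dplus_def by (rule iint_add[OF pk_meas[OF A] pq_meas(3)])
  finally show ?thesis .
qed

lemma E_le:
  assumes A: "A \<in> sets PX"
  shows "emeasure Em A \<le> emeasure Lm A + Dminus"
proof -
  have "emeasure Em A \<le> (\<integral>\<^sup>+x. \<integral>\<^sup>+ts. ennreal (p x ts) * kk A x ts + ennreal (q x ts - p x ts) \<partial>T \<partial>MX)"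
    unfolding Em_emeasure[OF A]
    by (rule iint_mono) (intro pw_le p_nonneg q_nonneg kk_le1; assumption)
  also have "\<dots> = emeasure Lm A + Dminus"
    unfolding Lm_emeasure'[OF A] Dminus_def by (rule iint_add[OF pk_meas2[OF A] pq_meas(4)])
  finally show ?thesis .
qed

lemma D_eq: "Dminus = Dplus"
proof -
  have pw: "ennreal a + ennreal (b - a) = ennreal b + ennreal (a - b)" if "0 \<le> a" "0 \<le> b" for a b :: real
    using that by (cases "a \<le> b") (simp_all add: ennreal_plus[symmetric] ennreal_neg del: ennreal_plus)
  have "1 + Dminus = (\<integral>\<^sup>+x. \<integral>\<^sup>+ts. ennreal (p x ts) + ennreal (q x ts - p x ts) \<partial>T \<partial>MX)"
    unfolding Dminus_def p_total[symmetric] by (rule iint_add[OF pq_meas(1) pq_meas(4), symmetric])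
  also have "\<dots> = (\<integral>\<^sup>+x. \<integral>\<^sup>+ts. ennreal (q x ts) + ennreal (p x ts - q x ts) \<partial>T \<partial>MX)"
    by (intro nn_integral_cong pw p_nonneg q_nonneg) auto
  also have "\<dots> = 1 + Dplus"
    unfolding Dplus_def q_total[symmetric] by (rule iint_add[OF pq_meas(2) pq_meas(3)])
  finally show ?thesis by (simp add: ennreal_add_left_cancel)
qed

lemma fbar0_int: "(\<integral>\<^sup>+x. ennreal (fbar MT f pi0 x) \<partial>MX) = 1"
proof -
  have "(\<integral>\<^sup>+x. ennreal (fbar MT f pi0 x) \<partial>MX) = (\<integral>\<^sup>+x. Ien pi0 x \<partial>MX)"
  proof (rule nn_integral_cong_AE)
    show "AE x in MX. ennreal (fbar MT f pi0 x) = Ien pi0 x"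
      using Ien_fin[OF pi0_dens] by (rule AE_mp) (auto intro!: AE_I2 simp: Ien_eq)
  qed
  also have "\<dots> = 1" by (rule Ien_integral[OF pi0_dens])
  finally show ?thesis .
qed

lemma D_sum: "Dplus + Dminus \<le> 2 * ennreal (eps_err MX MT f \<theta>0 pi0) + Delta_err MX MT f pr \<theta>0 pi0 * ennreal (1 / sqrt B)"
proof -
  define c where "c = ennreal (1 / sqrt B)"
  have absw: "ennreal (a - b) + ennreal (b - a) = ennreal \<bar>a - b\<bar>" for a b :: real
    by (cases "a \<le> b") (simp_all add: ennreal_neg)
  have "Dplus + Dminus = (\<integral>\<^sup>+x. \<integral>\<^sup>+ts. ennreal (p x ts - q x ts) + ennreal (q x ts - p x ts) \<partial>T \<partial>MX)"
    unfolding Dplus_def Dminus_def by (rule iint_add[OF pq_meas(3) pq_meas(4), symmetric])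
  also have "\<dots> = (\<integral>\<^sup>+x. \<integral>\<^sup>+ts. ennreal \<bar>p x ts - q x ts\<bar> \<partial>T \<partial>MX)"
    by (simp only: absw)
  also have "\<dots> \<le> (\<integral>\<^sup>+x. ennreal \<bar>f \<theta>0 x - fbar MT f pi0 x\<bar> + ennreal (f \<theta>0 x) * (chiM x * c) \<partial>MX)"
  proof (rule nn_integral_mono_AE)
    show "AE x in MX. (\<integral>\<^sup>+ts. ennreal \<bar>p x ts - q x ts\<bar> \<partial>T) \<le> ennreal \<bar>f \<theta>0 x - fbar MT f pi0 x\<bar> + ennreal (f \<theta>0 x) * (chiM x * c)"
      using Ien_fin[OF pi0_dens]
    proof (rule AE_mp, intro AE_I2 impI)
      fix x assume "x \<in> space MX" "Ien pi0 x \<noteq> \<infinity>"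
      then show "(\<integral>\<^sup>+ts. ennreal \<bar>p x ts - q x ts\<bar> \<partial>T) \<le> ennreal \<bar>f \<theta>0 x - fbar MT f pi0 x\<bar> + ennreal (f \<theta>0 x) * (chiM x * c)"
        unfolding c_def by (rule perx')
    qed
  qed
  also have "\<dots> = (\<integral>\<^sup>+x. ennreal \<bar>f \<theta>0 x - fbar MT f pi0 x\<bar> \<partial>MX) + (\<integral>\<^sup>+x. ennreal (f \<theta>0 x) * chiM x \<partial>MX) * c"
  proof -
    have m1: "(\<lambda>x. ennreal \<bar>f \<theta>0 x - fbar MT f pi0 x\<bar>) \<in> borel_measurable MX" by measurable
    have m2: "(\<lambda>x. ennreal (f \<theta>0 x) * chiM x) \<in> borel_measurable MX" by measurable
    have "(\<integral>\<^sup>+x. ennreal \<bar>f \<theta>0 x - fbar MT f pi0 x\<bar> + ennreal (f \<theta>0 x) * (chiM x * c) \<partial>MX)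
        = (\<integral>\<^sup>+x. ennreal \<bar>f \<theta>0 x - fbar MT f pi0 x\<bar> + ennreal (f \<theta>0 x) * chiM x * c \<partial>MX)"
      by (simp add: mult.assoc)
    also have "\<dots> = (\<integral>\<^sup>+x. ennreal \<bar>f \<theta>0 x - fbar MT f pi0 x\<bar> \<partial>MX) + (\<integral>\<^sup>+x. ennreal (f \<theta>0 x) * chiM x * c \<partial>MX)"
      by (rule nn_integral_add) (use m1 m2 in measurable)
    also have "(\<integral>\<^sup>+x. ennreal (f \<theta>0 x) * chiM x * c \<partial>MX) = (\<integral>\<^sup>+x. ennreal (f \<theta>0 x) * chiM x \<partial>MX) * c"
      by (rule nn_integral_multc[OF m2])
    finally show ?thesis .
  qed
  also have "\<dots> \<le> 2 * ennreal (eps_err MX MT f \<theta>0 pi0) + Delta_err MX MT f pr \<theta>0 pi0 * c"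
  proof (rule add_mono)
    show "(\<integral>\<^sup>+x. ennreal \<bar>f \<theta>0 x - fbar MT f pi0 x\<bar> \<partial>MX) \<le> 2 * ennreal (eps_err MX MT f \<theta>0 pi0)"
      unfolding eps_err_def
      by (rule L1_le_dTV) (auto simp: fth0_nonneg fbar_nonneg f_dens[OF \<theta>0] fbar0_int)
    have "(\<integral>\<^sup>+x. ennreal (f \<theta>0 x) * chiM x \<partial>MX) = (\<integral>\<^sup>+x. chiM x \<partial>density MX (f \<theta>0))"
      by (rule nn_integral_density[symmetric]) simp_all
    also have "\<dots> \<le> Delta_err MX MT f pr \<theta>0 pi0"
      unfolding Delta_err_def by (intro nn_integral_mono) (simp add: chiM_le)
    finally show "(\<integral>\<^sup>+x. ennreal (f \<theta>0 x) * chiM x \<partial>MX) * c \<le> Delta_err MX MT f pr \<theta>0 pi0 * c"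
      by (rule mult_right_mono) simp
  qed
  finally show ?thesis unfolding c_def .
qed

lemma Lm_le1:
  assumes A: "A \<in> sets PX"
  shows "emeasure Lm A \<le> 1"
proof -
  have "emeasure Lm A \<le> (\<integral>\<^sup>+x. \<integral>\<^sup>+ts. ennreal (p x ts) \<partial>T \<partial>MX)"
    unfolding Lm_emeasure'[OF A] by (rule iint_mono) (simp add: kk_le1 mult_left_le)
  then show ?thesis using p_total by simp
qed

lemma Lm_finite: "finite_measure Lm"
proof (rule finite_measureI)
  have sp: "space Lm = space PX" using Lm_sets by (rule sets_eq_imp_space_eq)
  have le: "emeasure Lm (space PX) \<le> 1" by (rule Lm_le1) (rule sets.top)
  have "emeasure Lm (space PX) < \<top>" by (rule order.strict_trans1[OF le]) simp
  then show "emeasure Lm (space Lm) \<noteq> \<infinity>" unfolding sp by simp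
qed

lemma main_pi0:
  "ennreal (d_exch MX M Lm) \<le> ennreal (eps_err MX MT f \<theta>0 pi0) + Delta_err MX MT f pr \<theta>0 pi0 / ennreal (2 * sqrt (real B))"
proof -
  define e where "e = eps_err MX MT f \<theta>0 pi0"
  define \<Delta> where "\<Delta> = Delta_err MX MT f pr \<theta>0 pi0"
  have B0: "0 < real B" using B by linarith
  have Bp: "0 < sqrt (real B)" using B0 by (rule real_sqrt_gt_zero)
  have c0: "0 < 2 * sqrt (real B)" using Bp by linarith
  have div: "\<Delta> / ennreal (2 * sqrt (real B)) = \<Delta> * ennreal (1 / (2 * sqrt (real B)))"
    unfolding divide_ennreal_def inverse_ennreal[OF c0] by (simp only: inverse_eq_divide)
  define k where "k = ennreal (1 / (2 * sqrt (real B)))"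
  have two: "2 * k = ennreal (1 / sqrt (real B))"
  proof -
    have "ennreal 2 * ennreal (1 / (2 * sqrt (real B))) = ennreal (2 * (1 / (2 * sqrt (real B))))"
      using Bp by (intro ennreal_mult[symmetric]) auto
    also have "2 * (1 / (2 * sqrt (real B))) = 1 / sqrt (real B)" using Bp by simp
    finally show ?thesis unfolding k_def by simp
  qed
  have "2 * Dplus = Dplus + Dminus" by (simp add: D_eq mult_2)
  also have "\<dots> \<le> 2 * ennreal e + \<Delta> * ennreal (1 / sqrt B)" using D_sum by (simp add: e_def \<Delta>_def)
  also have "\<dots> = 2 * (ennreal e + \<Delta> * k)"
    unfolding two[symmetric] by (simp only: distrib_left mult.left_commute[of 2 \<Delta> k])
  finally have "2 * Dplus \<le> 2 * (ennreal e + \<Delta> * k)" .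
  then have Dle: "Dplus \<le> ennreal e + \<Delta> / ennreal (2 * sqrt (real B))"
    unfolding div k_def[symmetric] using ennreal_mult_le_mult_iff[of 2 Dplus "ennreal e + \<Delta> * k"] by simp
  have "ennreal (d_exch MX M Lm) \<le> Dplus"
  proof (cases "Dplus = \<infinity>")
    case True then show ?thesis by simp
  next
    case False
    interpret Em: prob_space Em by (rule Em_prob)
    have dT: "dTV Lm Em \<le> enn2real Dplus"
    proof (rule dTV_le)
      fix A assume "A \<in> sets Lm"
      then have A: "A \<in> sets PX" by (simp only: Lm_sets)
      have eL: "emeasure Lm A < \<top>" using Lm_le1[OF A] by (simp add: le_less_trans)
      have eE: "emeasure Em A < \<top>" using Em.emeasure_finite[of A] by (simp add: less_top[symmetric])
      have Df: "Dplus < \<top>" using False by (simp add: less_top)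
      have "enn2real (emeasure Lm A) \<le> enn2real (emeasure Em A + Dplus)"
        using L_le[OF A] eE Df by (intro enn2real_mono) auto
      also have "\<dots> = enn2real (emeasure Em A) + enn2real Dplus" using eE Df by (rule enn2real_plus)
      finally have 1: "measure Lm A \<le> measure Em A + enn2real Dplus" by (simp add: measure_def)
      have "enn2real (emeasure Em A) \<le> enn2real (emeasure Lm A + Dplus)"
        using E_le[OF A] eL Df by (intro enn2real_mono) (auto simp: D_eq)
      also have "\<dots> = enn2real (emeasure Lm A) + enn2real Dplus" using eL Df by (rule enn2real_plus)
      finally have 2: "measure Em A \<le> measure Lm A + enn2real Dplus" by (simp add: measure_def)
      show "\<bar>measure Lm A - measure Em A\<bar> \<le> enn2real Dplus" using 1 2 by linarith
    qed
    have inset: "Em \<in> {E. prob_space E \<and> sets E = sets PX \<and> exchangeable {0..M} E}"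
      using Em_prob Em_sets Em_exch by (simp only: mem_Collect_eq simp_thms)
    have bdd: "bdd_below ((\<lambda>E. dTV Lm E) ` {E. prob_space E \<and> sets E = sets PX \<and> exchangeable {0..M} E})"
    proof (rule bdd_belowI2[where m=0])
      fix E assume "E \<in> {E. prob_space E \<and> sets E = sets PX \<and> exchangeable {0..M} E}"
      then have "prob_space E" by (simp only: mem_Collect_eq)
      then show "0 \<le> dTV Lm E" by (rule dTV_nonneg[OF Lm_finite])
    qed
    have "d_exch MX M Lm \<le> dTV Lm Em"
      unfolding d_exch_def by (rule cINF_lower[OF bdd inset])
    also have "\<dots> \<le> enn2real Dplus" by (rule dT)
    finally have "ennreal (d_exch MX M Lm) \<le> ennreal (enn2real Dplus)" by (rule ennreal_leI)
    also have "ennreal (enn2real Dplus) = Dplus"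
      using False by (intro ennreal_enn2real) (simp add: less_top[symmetric])
    finally show ?thesis .
  qed
  also note Dle
  finally show ?thesis unfolding e_def \<Delta>_def .
qed

end

theorem theorem2:
  fixes MX :: "'x measure" and MT :: "'t measure"
    and f :: "'t \<Rightarrow> 'x \<Rightarrow> real" and pr :: "'t \<Rightarrow> real"
    and B M :: nat and \<theta>0 :: 't
    and Q :: "'x \<Rightarrow> (nat \<Rightarrow> 't) \<Rightarrow> (nat \<Rightarrow> 'x) measure"
  assumes sfX: "sigma_finite_measure MX" and sfT: "sigma_finite_measure MT"
    and f_meas: "(\<lambda>(\<theta>, x). f \<theta> x) \<in> borel_measurable (MT \<Otimes>\<^sub>M MX)"
    and f_nonneg: "\<And>\<theta> x. \<theta> \<in> space MT \<Longrightarrow> x \<in> space MX \<Longrightarrow> 0 \<le> f \<theta> x"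
    and f_dens: "\<And>\<theta>. \<theta> \<in> space MT \<Longrightarrow> (\<integral>\<^sup>+ x. ennreal (f \<theta> x) \<partial>MX) = 1"
    and pi_dens: "is_density MT pr"
    and pi_pos: "\<And>\<theta>. \<theta> \<in> space MT \<Longrightarrow> 0 < pr \<theta>"
    and pi_supp: "supp_cover MX MT f pr"
    and B: "1 \<le> B" and M: "1 \<le> M"
    and Q_kernel: "(\<lambda>(x, ts). Q x ts) \<in> MX \<Otimes>\<^sub>M PiM {1..B} (\<lambda>_. MT)
                      \<rightarrow>\<^sub>M prob_algebra (PiM {1..M} (\<lambda>_. MX))"
    and Q_exch: "\<And>ts. ts \<in> space (PiM {1..B} (\<lambda>_. MT)) \<Longrightarrow>
        0 < g_const MX MT f pr B ts \<Longrightarrow> g_const MX MT f pr B ts < \<infinity> \<Longrightarrow>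
        exchangeable {0..M}
          (joint_law MX M (density MX (g_dens MX MT f pr B ts)) (\<lambda>x. Q x ts))"
    and \<theta>0: "\<theta>0 \<in> space MT"
  shows "ennreal (d_exch MX M
            (joint_law MX M (density MX (f \<theta>0))
               (\<lambda>x. PiM {1..B} (\<lambda>_. density MT (post_dens MT f pr x)) \<bind> (\<lambda>ts. Q x ts))))
         \<le> (INF pi0\<in>{pi0. is_density MT pi0 \<and> supp_cover MX MT f pi0}.
               ennreal (eps_err MX MT f \<theta>0 pi0)
               + Delta_err MX MT f pr \<theta>0 pi0 / ennreal (2 * sqrt (real B)))"
proof -
  interpret th2 MX MT f pr B M \<theta>0 Q
    by (rule th2.intro) (fact sfX sfT f_meas f_nonneg f_dens pi_dens pi_pos pi_supp B M Q_kernel Q_exch \<theta>0)+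
  show ?thesis
  proof (rule INF_greatest)
    fix pi0 assume "pi0 \<in> {pi0. is_density MT pi0 \<and> supp_cover MX MT f pi0}"
    then have p1: "is_density MT pi0" and p2: "supp_cover MX MT f pi0" by auto
    interpret th2p MX MT f pr B M \<theta>0 Q pi0
      by (rule th2p.intro, rule th2_axioms, rule th2p_axioms.intro[OF p1 p2])
    show "ennreal (d_exch MX M
            (joint_law MX M (density MX (f \<theta>0))
               (\<lambda>x. PiM {1..B} (\<lambda>_. density MT (post_dens MT f pr x)) \<bind> (\<lambda>ts. Q x ts))))
         \<le> ennreal (eps_err MX MT f \<theta>0 pi0) + Delta_err MX MT f pr \<theta>0 pi0 / ennreal (2 * sqrt (real B))"
      by (rule main_pi0)
  qed
qed

end
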